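(* Let $A$ be a unital $C^*$-algebra, $B$ a unital sub-$C^*$-algebra of $A$, and $\varphi\colon A\to\mathbb{C}$ a state such that there exists a conditional expectation $E\colon A\to B$ with $\varphi\circ E=\varphi$. Let $\rho\colon A\to\mathcal{B}(\mathcal{H})$ be the GNS representation associated with $\varphi$, and let $\mathcal{H}_\varphi$, $P_{\mathcal{H}_\varphi}$, $\Pi_{\varphi,B}\colon D_{\varphi,B}\to{\rm U}_A/{\rm U}_B$, $\iota_{\varphi,B}$ and $K_{\varphi,B}$ be as described in the context. Then: (1) the realization operator $\iota_{\varphi,B}\colon\mathcal{H}\to\mathcal{C}({\rm U}_A/{\rm U}_B,D_{\varphi,B})$ is injective; (2) for every $s\in{\rm U}_A/{\rm U}_B$ the map ${\rm ev}_s:=(\iota_{\varphi,B}(\cdot))(s)\colon\mathcal{H}\to(D_{\varphi,B})_s$ is bounded linear; (3) $K_{\varphi,B}(s,t)={\rm ev}_s\,({\rm ev}_t)^*$ for all $s,t\in{\rm U}_A/{\rm U}_B$ (so $K_{\varphi,B}$ is the positive definite reproducing kernel corresponding to $\iota_{\varphi,B}$); (4) $\iota_{\varphi,B}$ intertwines the unitary representation $\rho|_{{\rm U}_A}$ with the natural representation of ${\rm U}_A$ on $\mathcal{C}({\rm U}_A/{\rm U}_B,D_{\varphi,B})$, i.e. $\iota_{\varphi,B}(\rho(v)h)(s)=v\cdot\big(\iota_{\varphi,B}(h)(v^{-1}\cdot s)\big)$ for all $v\in{\rm U}_A$, $h\in\mathcal{H}$, $s\in{\rm U}_A/{\rm 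U}_B$.
   Context: For a unital $C^*$-algebra $A$, ${\rm U}_A=\{u\in A\mid uu^*=u^*u=\mathbf{1}\}$ is its unitary group and ${\rm U}_B={\rm U}_A\cap B$. A conditional expectation $E\colon A\to B$ is a bounded linear idempotent map from $A$ onto $B$ with $\|E\|=1$. GNS: $\mathcal{H}$ is the completion of $A$ modulo the null space of the form $(a_1,a_2)\mapsto\varphi(a_2^*a_1)$, and $\rho(a)$ is induced by left multiplication $a'\mapsto aa'$. $\mathcal{H}_\varphi$ is the closure in $\mathcal{H}$ of the image of $B$ (this is the GNS space of $\varphi|_B$), $\rho_\varphi\colon B\to\mathcal{B}(\mathcal{H}_\varphi)$ is the GNS representation of $B$ for $\varphi|_B$ (the restriction of $\rho(b)$ to $\mathcal{H}_\varphi$), and $P_{\mathcal{H}_\varphi}\colon\mathcal{H}\to\mathcal{H}_\varphi$ is the orthogonal projection. Homogeneous bundle: $D_{\varphi,B}={\rm U}_A\times_{{\rm U}_B}\mathcal{H}_\varphi$ is the quotient of ${\rm U}_A\times\mathcal{H}_\varphi$ by the relation $(u_1,f_1)\sim(u_2,f_2)$ iff there is $v\in{\rm U}_B$ with $u_1=u_2v$ and $f_1=\rho_\varphi(v^{-1})f_2$; $[(u,f)]$ denotes the class, $\Pi_{\varphi,B}([(u,f)])=u{\rm U}_B$. This is a Hermitian vector bundle over the homogeneous manifold ${\rm U}_A/{\rm U}_B$ with fiber inner product $([(u,f)]\mid[(u,g)])=(f\mid g)$, and ${\rm U}_A$ acts on it by $v\cdot[(u,f)]=[(vu,f)]$, covering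 the left action on ${\rm U}_A/{\rm U}_B$. The natural representation of ${\rm U}_A$ on sections is $(v\cdot\sigma)(s)=v\cdot\sigma(v^{-1}\cdot s)$. Realization operator: $\iota_{\varphi,B}(h)(u{\rm U}_B)=[(u,P_{\mathcal{H}_\varphi}(\rho(u)^{-1}h))]$ for $h\in\mathcal{H}$, $u\in{\rm U}_A$. Kernel: $K_{\varphi,B}$ is the section of the bundle over $({\rm U}_A/{\rm U}_B)^2$ with fibers $\mathcal{B}((D_{\varphi,B})_t,(D_{\varphi,B})_s)$ given by $K_{\varphi,B}(u_1{\rm U}_B,u_2{\rm U}_B)[(u_2,f)]=[(u_1,P_{\mathcal{H}_\varphi}(\rho(u_1^{-1}u_2)f))]$ for $u_1,u_2\in{\rm U}_A$, $f\in\mathcal{H}_\varphi$ (these are well defined). A positive definite reproducing kernel on a Hermitian bundle is a continuous section $K$ with $\sum_{j,l}(K(t_l,t_j)\xi_j\mid\xi_l)\ge0$ for all finite families $t_j$, $\xi_j\in D_{t_j}$. *)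

theory Defs
  imports "HOL-Analysis.Analysis"
begin

class complex_vector = real_vector +
  fixes scaleC :: "complex \<Rightarrow> 'a \<Rightarrow> 'a"
  assumes scaleC_add_right: "scaleC a (x + y) = scaleC a x + scaleC a y"
    and scaleC_add_left: "scaleC (a + b) x = scaleC a x + scaleC b x"
    and scaleC_scaleC: "scaleC a (scaleC b x) = scaleC (a * b) x"
    and scaleC_one: "scaleC 1 x = x"
    and scaleR_scaleC: "scaleR r x = scaleC (complex_of_real r) x"

class complex_normed_vector = complex_vector + real_normed_vector +
  assumes norm_scaleC: "norm (scaleC a x) = cmod a * norm x"

text \<open>Complex Hilbert space; the inner product is linear in the first argument.\<close>
class complex_hilbert = complex_normed_vector + complete_space +
  fixes cinner :: "'a \<Rightarrow> 'a \<Rightarrow> complex"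
  assumes cinner_commute: "cinner x y = cnj (cinner y x)"
    and cinner_add_left: "cinner (x + y) z = cinner x z + cinner y z"
    and cinner_scaleC_left: "cinner (scaleC c x) y = c * cinner x y"
    and cinner_self_real: "cinner x x \<in> \<real>"
    and cinner_self_nonneg: "0 \<le> Re (cinner x x)"
    and norm_cinner: "norm x = sqrt (Re (cinner x x))"

class cstar_algebra = complex_normed_vector + real_normed_algebra_1 + complete_space +
  fixes cstar :: "'a \<Rightarrow> 'a"
  assumes cstar_cstar: "cstar (cstar x) = x"
    and cstar_add: "cstar (x + y) = cstar x + cstar y"
    and cstar_scaleC: "cstar (scaleC c x) = scaleC (cnj c) (cstar x)"
    and cstar_mult: "cstar (x * y) = cstar y * cstar x"
    and scaleC_mult_left: "scaleC c x * y = scaleC c (x * y)"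
    and mult_scaleC_right: "x * scaleC c y = scaleC c (x * y)"
    and cstar_identity: "norm (cstar x * x) = (norm x)\<^sup>2"

instantiation complex :: complex_vector
begin
definition scaleC_complex :: "complex \<Rightarrow> complex \<Rightarrow> complex" where
  "scaleC_complex a z = a * z"
instance by standard (auto simp: scaleC_complex_def algebra_simps scaleR_conv_of_real)
end

instance complex :: complex_normed_vector
  by standard (simp add: scaleC_complex_def norm_mult)

definition clinear :: "('a::complex_vector \<Rightarrow> 'b::complex_vector) \<Rightarrow> bool" where
  "clinear f \<longleftrightarrow> (\<forall>x y. f (x + y) = f x + f y) \<and> (\<forall>c x. f (scaleC c x) = scaleC c (f x))"

definition unital_sub_cstar :: "'a::cstar_algebra set \<Rightarrow> bool" where
  "unital_sub_cstar B \<longleftrightarrow> 1 \<in> B \<and> closed B \<and>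
     (\<forall>x\<in>B. \<forall>y\<in>B. x + y \<in> B \<and> x * y \<in> B) \<and>
     (\<forall>x\<in>B. \<forall>c. scaleC c x \<in> B) \<and> (\<forall>x\<in>B. cstar x \<in> B)"

definition is_state :: "('a::cstar_algebra \<Rightarrow> complex) \<Rightarrow> bool" where
  "is_state \<phi> \<longleftrightarrow> clinear \<phi> \<and>
     (\<forall>a. \<phi> (cstar a * a) \<in> \<real> \<and> 0 \<le> Re (\<phi> (cstar a * a))) \<and> \<phi> 1 = 1"

definition cond_exp :: "('a::cstar_algebra \<Rightarrow> 'a) \<Rightarrow> 'a set \<Rightarrow> bool" where
  "cond_exp E B \<longleftrightarrow> clinear E \<and> bounded_linear E \<and> onorm E = 1 \<and>
     range E = B \<and> (\<forall>a. E (E a) = E a)"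

definition unitary_group :: "'a::cstar_algebra set" where
  "unitary_group = {u. u * cstar u = 1 \<and> cstar u * u = 1}"

abbreviation UB :: "'a::cstar_algebra set \<Rightarrow> 'a set" where
  "UB B \<equiv> unitary_group \<inter> B"

definition is_GNS :: "('a::cstar_algebra \<Rightarrow> complex) \<Rightarrow> ('a \<Rightarrow> 'h::complex_hilbert) \<Rightarrow> ('a \<Rightarrow> 'h \<Rightarrow> 'h) \<Rightarrow> bool" where
  "is_GNS \<phi> \<Lambda> \<rho> \<longleftrightarrow> clinear \<Lambda> \<and> closure (range \<Lambda>) = UNIV \<and>
     (\<forall>a1 a2. cinner (\<Lambda> a1) (\<Lambda> a2) = \<phi> (cstar a2 * a1)) \<and>
     (\<forall>a. clinear (\<rho> a) \<and> bounded_linear (\<rho> a)) \<and>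
     (\<forall>a b. \<rho> a (\<Lambda> b) = \<Lambda> (a * b))"

definition Hphi :: "('a::cstar_algebra \<Rightarrow> 'h::complex_hilbert) \<Rightarrow> 'a set \<Rightarrow> 'h set" where
  "Hphi \<Lambda> B = closure (\<Lambda> ` B)"

definition cproj :: "'h::complex_hilbert set \<Rightarrow> 'h \<Rightarrow> 'h" where
  "cproj S h = (THE p. p \<in> S \<and> (\<forall>q\<in>S. cinner (h - p) q = 0))"

definition lcoset :: "'a::cstar_algebra set \<Rightarrow> 'a \<Rightarrow> 'a set" where
  "lcoset B u = (\<lambda>v. u * v) ` UB B"

definition homspace :: "'a::cstar_algebra set \<Rightarrow> 'a set set" where
  "homspace B = lcoset B ` unitary_group"

definition hom_act :: "'a::cstar_algebra \<Rightarrow> 'a set \<Rightarrow> 'a set" where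
  "hom_act v s = (\<lambda>w. v * w) ` s"

text \<open>Equivalence class [(u,f)] of (u,f) in U_A \<times> H_\<phi>.\<close>
definition bcls :: "('a::cstar_algebra \<Rightarrow> 'h \<Rightarrow> 'h) \<Rightarrow> 'a set \<Rightarrow> 'a \<Rightarrow> 'h \<Rightarrow> ('a \<times> 'h) set" where
  "bcls \<rho> B u f = (\<lambda>v. (u * v, \<rho> (cstar v) f)) ` UB B"

definition hbundle :: "('a::cstar_algebra \<Rightarrow> 'h::complex_hilbert) \<Rightarrow> ('a \<Rightarrow> 'h \<Rightarrow> 'h) \<Rightarrow> 'a set \<Rightarrow> ('a \<times> 'h) set set" where
  "hbundle \<Lambda> \<rho> B = {bcls \<rho> B u f | u f. u \<in> unitary_group \<and> f \<in> Hphi \<Lambda> B}"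

definition bproj :: "'a::cstar_algebra set \<Rightarrow> ('a \<times> 'h) set \<Rightarrow> 'a set" where
  "bproj B \<xi> = (THE s. \<forall>p\<in>\<xi>. s = lcoset B (fst p))"

definition fiber :: "('a::cstar_algebra \<Rightarrow> 'h::complex_hilbert) \<Rightarrow> ('a \<Rightarrow> 'h \<Rightarrow> 'h) \<Rightarrow> 'a set \<Rightarrow> 'a set \<Rightarrow> ('a \<times> 'h) set set" where
  "fiber \<Lambda> \<rho> B s = {\<xi> \<in> hbundle \<Lambda> \<rho> B. bproj B \<xi> = s}"

definition fadd :: "('a::cstar_algebra \<Rightarrow> 'h::complex_hilbert) \<Rightarrow> ('a \<Rightarrow> 'h \<Rightarrow> 'h) \<Rightarrow> 'a set \<Rightarrow> ('a \<times> 'h) set \<Rightarrow> ('a \<times> 'h) set \<Rightarrow> ('a \<times> 'h) set" where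
  "fadd \<Lambda> \<rho> B \<xi> \<eta> = (THE \<zeta>. \<exists>u f g. u \<in> unitary_group \<and> f \<in> Hphi \<Lambda> B \<and> g \<in> Hphi \<Lambda> B \<and>
      \<xi> = bcls \<rho> B u f \<and> \<eta> = bcls \<rho> B u g \<and> \<zeta> = bcls \<rho> B u (f + g))"

definition fscale :: "('a::cstar_algebra \<Rightarrow> 'h::complex_hilbert) \<Rightarrow> ('a \<Rightarrow> 'h \<Rightarrow> 'h) \<Rightarrow> 'a set \<Rightarrow> complex \<Rightarrow> ('a \<times> 'h) set \<Rightarrow> ('a \<times> 'h) set" where
  "fscale \<Lambda> \<rho> B c \<xi> = (THE \<zeta>. \<exists>u f. u \<in> unitary_group \<and> f \<in> Hphi \<Lambda> B \<and>
      \<xi> = bcls \<rho> B u f \<and> \<zeta> = bcls \<rho> B u (scaleC c f))"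

definition finner :: "('a::cstar_algebra \<Rightarrow> 'h::complex_hilbert) \<Rightarrow> ('a \<Rightarrow> 'h \<Rightarrow> 'h) \<Rightarrow> 'a set \<Rightarrow> ('a \<times> 'h) set \<Rightarrow> ('a \<times> 'h) set \<Rightarrow> complex" where
  "finner \<Lambda> \<rho> B \<xi> \<eta> = (THE c. \<exists>u f g. u \<in> unitary_group \<and> f \<in> Hphi \<Lambda> B \<and> g \<in> Hphi \<Lambda> B \<and>
      \<xi> = bcls \<rho> B u f \<and> \<eta> = bcls \<rho> B u g \<and> c = cinner f g)"

definition bact :: "'a::cstar_algebra \<Rightarrow> ('a \<times> 'h) set \<Rightarrow> ('a \<times> 'h) set" where
  "bact v \<xi> = (\<lambda>(u, f). (v * u, f)) ` \<xi>"

definition quot_top :: "'x topology \<Rightarrow> ('x \<Rightarrow> 'y) \<Rightarrow> 'y topology" where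
  "quot_top X q = topology (\<lambda>U. U \<subseteq> q ` topspace X \<and> openin X {x \<in> topspace X. q x \<in> U})"

definition hom_top :: "'a::cstar_algebra set \<Rightarrow> 'a set topology" where
  "hom_top B = quot_top (top_of_set unitary_group) (lcoset B)"

definition bundle_top :: "('a::cstar_algebra \<Rightarrow> 'h::complex_hilbert) \<Rightarrow> ('a \<Rightarrow> 'h \<Rightarrow> 'h) \<Rightarrow> 'a set \<Rightarrow> ('a \<times> 'h) set topology" where
  "bundle_top \<Lambda> \<rho> B = quot_top (prod_topology (top_of_set unitary_group) (top_of_set (Hphi \<Lambda> B)))
      (\<lambda>(u, f). bcls \<rho> B u f)"

definition realiz :: "('a::cstar_algebra \<Rightarrow> 'h::complex_hilbert) \<Rightarrow> ('a \<Rightarrow> 'h \<Rightarrow> 'h) \<Rightarrow> 'a set \<Rightarrow> 'h \<Rightarrow> 'a set \<Rightarrow> ('a \<times> 'h) set" where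
  "realiz \<Lambda> \<rho> B h s = (THE \<xi>. \<exists>u\<in>unitary_group. s = lcoset B u \<and>
      \<xi> = bcls \<rho> B u (cproj (Hphi \<Lambda> B) (\<rho> (cstar u) h)))"

definition kern :: "('a::cstar_algebra \<Rightarrow> 'h::complex_hilbert) \<Rightarrow> ('a \<Rightarrow> 'h \<Rightarrow> 'h) \<Rightarrow> 'a set \<Rightarrow> 'a set \<Rightarrow> 'a set \<Rightarrow> ('a \<times> 'h) set \<Rightarrow> ('a \<times> 'h) set" where
  "kern \<Lambda> \<rho> B s t \<xi> = (THE \<zeta>. \<exists>u1 u2 f. u1 \<in> unitary_group \<and> u2 \<in> unitary_group \<and> f \<in> Hphi \<Lambda> B \<and>
      s = lcoset B u1 \<and> t = lcoset B u2 \<and> \<xi> = bcls \<rho> B u2 f \<and>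
      \<zeta> = bcls \<rho> B u1 (cproj (Hphi \<Lambda> B) (\<rho> (cstar u1 * u2) f)))"

end

theory Submission
  imports Defs "HOL-Computational_Algebra.Formal_Power_Series"
begin


lemma scaleC_zero_right [simp]: "scaleC c (0::'a::complex_vector) = 0"
proof -
  have "scaleC c (0::'a) = scaleC c 0 + scaleC c 0" by (metis add_0 scaleC_add_right)
  then show ?thesis by simp
qed

lemma scaleC_zero_left [simp]: "scaleC 0 (x::'a::complex_vector) = 0"
  by (metis of_real_0 scaleR_scaleC scaleR_zero_left)

lemma scaleC_minus_right: "scaleC c (- x) = - scaleC c (x::'a::complex_vector)"
  by (metis add.inverse_unique add.right_inverse scaleC_add_right scaleC_zero_right)

lemma scaleC_diff_right: "scaleC c (x - y) = scaleC c x - scaleC c (y::'a::complex_vector)"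
  by (metis diff_conv_add_uminus scaleC_add_right scaleC_minus_right)

lemma scaleC_minus_left: "scaleC (- c) x = - scaleC c (x::'a::complex_vector)"
  by (metis add.inverse_unique add.right_inverse scaleC_add_left scaleC_zero_left)

lemma scaleC_diff_left: "scaleC (c - d) x = scaleC c x - scaleC d (x::'a::complex_vector)"
  by (metis diff_conv_add_uminus scaleC_add_left scaleC_minus_left)

lemma scaleC_of_real: "scaleC (complex_of_real r) x = scaleR r (x::'a::complex_vector)"
  by (simp add: scaleR_scaleC)

lemma norm_scaleC': "norm (scaleC a x) = cmod a * norm (x::'a::complex_normed_vector)"
  by (rule norm_scaleC)

context
  fixes dummy :: "'h::complex_hilbert"
begin
end

lemma cinner_zero_left [simp]: "cinner 0 (y::'h::complex_hilbert) = 0"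
  by (metis add.right_neutral add_cancel_right_right cinner_add_left)

lemma cinner_minus_left: "cinner (- x) (y::'h::complex_hilbert) = - cinner x y"
  by (metis add.inverse_unique add.right_inverse cinner_add_left cinner_zero_left)

lemma cinner_diff_left: "cinner (x - z) (y::'h::complex_hilbert) = cinner x y - cinner z y"
  by (metis cinner_add_left cinner_minus_left diff_conv_add_uminus)

lemma cinner_add_right: "cinner x (y + z::'h::complex_hilbert) = cinner x y + cinner x z"
  by (metis cinner_add_left cinner_commute complex_cnj_add)

lemma cinner_scaleC_right: "cinner x (scaleC c y::'h::complex_hilbert) = cnj c * cinner x y"
  by (metis cinner_commute cinner_scaleC_left complex_cnj_mult)

lemma cinner_zero_right [simp]: "cinner x (0::'h::complex_hilbert) = 0"
  by (metis cinner_commute cinner_zero_left complex_cnj_zero)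

lemma cinner_minus_right: "cinner x (- y::'h::complex_hilbert) = - cinner x y"
  by (metis cinner_commute cinner_minus_left complex_cnj_minus)

lemma cinner_diff_right: "cinner x (y - z::'h::complex_hilbert) = cinner x y - cinner x z"
  by (metis cinner_add_right cinner_minus_right diff_conv_add_uminus)

lemma cinner_scaleR_left: "cinner (scaleR r x) (y::'h::complex_hilbert) = scaleR r (cinner x y)"
  by (simp add: scaleR_scaleC cinner_scaleC_left scaleC_complex_def)

lemma cinner_scaleR_right: "cinner x (scaleR r y::'h::complex_hilbert) = scaleR r (cinner x y)"
  by (simp add: scaleR_scaleC cinner_scaleC_right scaleC_complex_def)

lemma norm_sq_cinner: "(norm x)\<^sup>2 = Re (cinner x (x::'h::complex_hilbert))"
  by (simp add: norm_cinner cinner_self_nonneg)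

lemma cinner_self_eq: "cinner x (x::'h::complex_hilbert) = complex_of_real ((norm x)\<^sup>2)"
proof -
  have "Im (cinner x x) = 0" using cinner_self_real[of x] by (simp add: complex_is_Real_iff)
  then show ?thesis by (simp add: norm_sq_cinner complex_eq_iff)
qed

lemma Re_cinner_commute: "Re (cinner y x) = Re (cinner x (y::'h::complex_hilbert))"
  by (subst cinner_commute) simp


lemma norm_add_sq: "(norm (x + y))\<^sup>2 = (norm x)\<^sup>2 + (norm y)\<^sup>2 + 2 * Re (cinner x (y::'h::complex_hilbert))"
  by (simp add: norm_sq_cinner cinner_add_left cinner_add_right Re_cinner_commute)

lemma norm_diff_sq: "(norm (x - y))\<^sup>2 = (norm x)\<^sup>2 + (norm y)\<^sup>2 - 2 * Re (cinner x (y::'h::complex_hilbert))"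
  by (simp add: norm_sq_cinner cinner_diff_left cinner_diff_right Re_cinner_commute)

lemma cauchy_schwarz_sq: "(cmod (cinner x y))\<^sup>2 \<le> (norm x)\<^sup>2 * (norm (y::'h::complex_hilbert))\<^sup>2"
proof (cases "y = 0")
  case True then show ?thesis by simp
next
  case False
  define c where "c = cinner x y"
  define n where "n = (norm y)\<^sup>2"
  have n: "n > 0" using False by (simp add: n_def)
  define t where "t = c / complex_of_real n"
  have cc: "c * cnj c = complex_of_real ((cmod c)\<^sup>2)" by (rule complex_norm_square[symmetric])
  have "cnj t * c = (c * cnj c) / complex_of_real n" by (simp add: t_def mult.commute)
  also have "\<dots> = complex_of_real ((cmod c)\<^sup>2 / n)" by (simp only: cc of_real_divide)
  finally have ct: "cnj t * c = complex_of_real ((cmod c)\<^sup>2 / n)" .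
  have tn: "(cmod t)\<^sup>2 * n = (cmod c)\<^sup>2 / n"
    using n by (simp add: t_def norm_divide power_divide power2_eq_square)
  have "0 \<le> (norm (x - scaleC t y))\<^sup>2" by simp
  also have "\<dots> = (norm x)\<^sup>2 + (cmod t)\<^sup>2 * n - 2 * Re (cnj t * c)"
    by (simp add: norm_diff_sq norm_scaleC cinner_scaleC_right power_mult_distrib n_def c_def)
  finally have "(cmod c)\<^sup>2 / n \<le> (norm x)\<^sup>2" unfolding ct tn by simp
  then show ?thesis using n by (simp add: c_def n_def field_simps)
qed

lemma cauchy_schwarz: "cmod (cinner x y) \<le> norm x * norm (y::'h::complex_hilbert)"
  using cauchy_schwarz_sq[of x y]
  by (metis mult_nonneg_nonneg norm_ge_zero power2_le_imp_le power_mult_distrib)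

lemma bounded_bilinear_cinner: "bounded_bilinear (cinner :: 'h::complex_hilbert \<Rightarrow> 'h \<Rightarrow> complex)"
proof
  fix a a' b b' :: 'h and r :: real
  show "cinner (a + a') b = cinner a b + cinner a' b" by (rule cinner_add_left)
  show "cinner a (b + b') = cinner a b + cinner a b'" by (rule cinner_add_right)
  show "cinner (r *\<^sub>R a) b = r *\<^sub>R cinner a b" by (rule cinner_scaleR_left)
  show "cinner a (r *\<^sub>R b) = r *\<^sub>R cinner a b" by (rule cinner_scaleR_right)
  show "\<exists>K. \<forall>a b. norm (cinner a b) \<le> norm a * norm b * K"
    by (rule exI[of _ 1]) (simp add: cauchy_schwarz)
qed

lemma continuous_on_cinner [continuous_intros]:
  fixes f g :: "'x::topological_space \<Rightarrow> 'h::complex_hilbert"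
  shows "continuous_on S f \<Longrightarrow> continuous_on S g \<Longrightarrow> continuous_on S (\<lambda>x. cinner (f x) (g x))"
  by (rule bounded_bilinear.continuous_on[OF bounded_bilinear_cinner])

lemma tendsto_cinner [tendsto_intros]:
  fixes f g :: "'x \<Rightarrow> 'h::complex_hilbert"
  shows "(f \<longlongrightarrow> a) F \<Longrightarrow> (g \<longlongrightarrow> b) F \<Longrightarrow> ((\<lambda>x. cinner (f x) (g x)) \<longlongrightarrow> cinner a b) F"
  by (rule bounded_bilinear.tendsto[OF bounded_bilinear_cinner])

lemma bounded_linear_scaleC: "bounded_linear (scaleC c :: 'a::complex_normed_vector \<Rightarrow> 'a)"
  apply (rule bounded_linear_intro[where K="cmod c"])
  apply (rule scaleC_add_right)
  apply (simp add: scaleR_scaleC scaleC_scaleC mult.commute)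
  apply (simp add: norm_scaleC mult.commute)
  done


section \<open>Projection theorem\<close>

lemma mult_cnj_self: "z * cnj z = (complex_of_real (cmod z))\<^sup>2"
  using complex_norm_square[of z] by simp


lemma proj_exists:
  fixes S :: "'h::complex_hilbert set"
  assumes cl: "closed S" and z: "0 \<in> S"
    and add: "\<And>x y. x \<in> S \<Longrightarrow> y \<in> S \<Longrightarrow> x + y \<in> S"
    and sc: "\<And>c x. x \<in> S \<Longrightarrow> scaleC c x \<in> S"
  shows "\<exists>p. p \<in> S \<and> (\<forall>q\<in>S. cinner (x - p) q = 0)"
proof -
  have ne: "S \<noteq> {}" using z by auto
  define d where "d = infdist x S"
  have d0: "0 \<le> d" by (simp add: d_def infdist_nonneg)
  have dle: "d \<le> norm (x - q)" if "q \<in> S" for q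
    using infdist_le[OF that, of x] by (simp add: d_def dist_norm)
  define eps where "eps = (\<lambda>n::nat. inverse (real (Suc n)))"
  have eps0: "eps n > 0" for n by (simp add: eps_def)
  have "\<exists>s\<in>S. norm (x - s) < d + eps n" for n
  proof -
    have bdd: "bdd_below ((\<lambda>a. dist x a) ` S)" by (rule bdd_belowI[of _ 0]) auto
    have "(INF a\<in>S. dist x a) < d + eps n" using eps0[of n]
      by (simp add: d_def infdist_notempty[OF ne])
    then show ?thesis using cINF_less_iff[OF ne bdd] by (auto simp: dist_norm)
  qed
  then obtain sq where sqS: "\<And>n. sq n \<in> S" and sqd: "\<And>n. norm (x - sq n) < d + eps n"
    by metis
  define h where "h = (\<lambda>n. 2 * (2 * d * eps n + (eps n)\<^sup>2))"
  have heps: "h \<longlonglongrightarrow> 0"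
  proof -
    have "eps \<longlonglongrightarrow> 0" unfolding eps_def by (rule LIMSEQ_inverse_real_of_nat)
    then have "(\<lambda>n. 2 * (2 * d * eps n + (eps n)\<^sup>2)) \<longlonglongrightarrow> 2 * (2 * d * 0 + 0\<^sup>2)"
      by (intro tendsto_intros)
    then show ?thesis by (simp add: h_def)
  qed
  have sqbound: "(norm (x - sq n))\<^sup>2 \<le> d\<^sup>2 + h n / 2" for n
  proof -
    have "(norm (x - sq n))\<^sup>2 \<le> (d + eps n)\<^sup>2"
      using sqd[of n] by (intro power_mono) auto
    moreover have "h n / 2 = 2 * d * eps n + (eps n)\<^sup>2" by (simp add: h_def)
    ultimately show ?thesis unfolding power2_sum by linarith
  qed
  have par: "(norm (sq m - sq n))\<^sup>2 \<le> h m + h n" for m n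
  proof -
    define a where "a = x - sq m"
    define b where "b = x - sq n"
    define mid where "mid = scaleR (1/2) (sq m + sq n)"
    have midS: "mid \<in> S" unfolding mid_def scaleR_scaleC by (intro sc add sqS)
    have "a + b = scaleR 2 (x - mid)"
      by (simp add: a_def b_def mid_def scaleR_diff_right scaleR_2)
    then have ab: "norm (a + b) = 2 * norm (x - mid)" by simp
    have "(norm (a + b))\<^sup>2 + (norm (a - b))\<^sup>2 = 2 * (norm a)\<^sup>2 + 2 * (norm b)\<^sup>2"
      by (simp add: norm_add_sq norm_diff_sq)
    moreover have "(norm (a - b))\<^sup>2 = (norm (sq m - sq n))\<^sup>2"
      by (simp add: a_def b_def norm_minus_commute)
    moreover have "(norm (a + b))\<^sup>2 \<ge> 4 * d\<^sup>2"
    proof -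
      have "2 * d \<le> norm (a + b)" using dle[OF midS] ab by simp
      then have "(2 * d)\<^sup>2 \<le> (norm (a + b))\<^sup>2" using d0 by (intro power_mono) auto
      then show ?thesis by (simp add: power_mult_distrib)
    qed
    moreover have "(norm a)\<^sup>2 \<le> d\<^sup>2 + h m / 2" "(norm b)\<^sup>2 \<le> d\<^sup>2 + h n / 2"
      using sqbound by (auto simp: a_def b_def)
    ultimately show ?thesis by linarith
  qed
  have "Cauchy sq"
  proof (rule metric_CauchyI)
    fix e :: real assume e: "e > 0"
    then have "e\<^sup>2 / 2 > 0" by simp
    with heps obtain N where N: "\<And>n. n \<ge> N \<Longrightarrow> norm (h n) < e\<^sup>2 / 2"
      unfolding LIMSEQ_def dist_norm by (metis diff_zero)
    show "\<exists>M. \<forall>m\<ge>M. \<forall>n\<ge>M. dist (sq m) (sq n) < e"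
    proof (intro exI allI impI)
      fix m n assume "m \<ge> N" "n \<ge> N"
      then have "norm (h m) < e\<^sup>2 / 2" "norm (h n) < e\<^sup>2 / 2" using N by auto
      then have "h m < e\<^sup>2 / 2" "h n < e\<^sup>2 / 2" by auto
      then have "(norm (sq m - sq n))\<^sup>2 < e\<^sup>2" using par[of m n] by linarith
      then have "norm (sq m - sq n) < e" using e by (simp add: power_less_imp_less_base)
      then show "dist (sq m) (sq n) < e" by (simp add: dist_norm)
    qed
  qed
  then obtain p where lim: "sq \<longlonglongrightarrow> p" using Cauchy_convergent_iff convergent_def by blast
  have pS: "p \<in> S" by (rule closed_sequentially[OF cl sqS lim])
  have pd: "norm (x - p) \<le> d"
  proof -
    have "(\<lambda>n. norm (x - sq n)) \<longlonglongrightarrow> norm (x - p)" by (intro tendsto_intros lim)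
    moreover have "(\<lambda>n. d + eps n) \<longlonglongrightarrow> d + 0"
      unfolding eps_def by (intro tendsto_intros LIMSEQ_inverse_real_of_nat)
    ultimately have "norm (x - p) \<le> d + 0"
      by (rule LIMSEQ_le) (auto intro: less_imp_le sqd)
    then show ?thesis by simp
  qed
  have orth: "cinner (x - p) q = 0" if qS: "q \<in> S" for q
  proof -
    define zz where "zz = x - p"
    define c where "c = cinner zz q"
    define t where "t = 1 / ((norm q)\<^sup>2 + 1)"
    have q1: "(norm q)\<^sup>2 + 1 > 0" by (simp add: add_nonneg_pos)
    have t0: "t > 0" using q1 by (simp add: t_def)
    define w where "w = scaleC (complex_of_real t * c) q"
    have "p + w \<in> S" unfolding w_def by (intro add pS sc qS)
    then have "d \<le> norm (zz - w)" using dle by (simp add: zz_def algebra_simps)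
    then have "norm zz \<le> norm (zz - w)" using pd zz_def by simp
    then have "(norm zz)\<^sup>2 \<le> (norm (zz - w))\<^sup>2" by (intro power_mono) auto
    also have "\<dots> = (norm zz)\<^sup>2 + (norm w)\<^sup>2 - 2 * Re (cinner zz w)" by (rule norm_diff_sq)
    also have "cinner zz w = complex_of_real (t * (cmod c)\<^sup>2)"
      by (simp add: w_def cinner_scaleC_right c_def[symmetric] mult_cnj_self mult.commute mult.left_commute)
    also have "(norm w)\<^sup>2 = t\<^sup>2 * (cmod c)\<^sup>2 * (norm q)\<^sup>2"
      using t0 by (simp add: w_def norm_scaleC norm_mult power_mult_distrib)
    finally have "2 * (t * (cmod c)\<^sup>2) \<le> t\<^sup>2 * (cmod c)\<^sup>2 * (norm q)\<^sup>2" by simp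
    then have "2 * (cmod c)\<^sup>2 \<le> t * (cmod c)\<^sup>2 * (norm q)\<^sup>2"
      using t0 by (simp add: power2_eq_square mult.assoc mult.left_commute)
    also have "\<dots> = (cmod c)\<^sup>2 * ((norm q)\<^sup>2 / ((norm q)\<^sup>2 + 1))"
      by (simp add: t_def)
    also have "\<dots> \<le> (cmod c)\<^sup>2 * 1"
      using q1 by (intro mult_left_mono) auto
    finally have "(cmod c)\<^sup>2 \<le> 0" by simp
    then show ?thesis by (simp add: c_def zz_def)
  qed
  show ?thesis using pS orth by blast
qed




instance cstar_algebra \<subseteq> banach ..

lemma cstar_zero [simp]: "cstar 0 = (0::'a::cstar_algebra)"
  by (metis add_cancel_right_right add_0 cstar_add)

lemma cstar_minus: "cstar (- x) = - cstar (x::'a::cstar_algebra)"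
  by (metis add.inverse_unique add.right_inverse cstar_add cstar_zero)

lemma cstar_diff: "cstar (x - y) = cstar x - cstar (y::'a::cstar_algebra)"
  by (metis cstar_add cstar_minus diff_conv_add_uminus)

lemma cstar_one [simp]: "cstar 1 = (1::'a::cstar_algebra)"
proof -
  have "cstar (1::'a) = cstar 1 * 1" by simp
  also have "\<dots> = cstar 1 * cstar (cstar 1)" by (simp only: cstar_cstar)
  also have "\<dots> = cstar (cstar 1 * 1)" by (simp only: cstar_mult)
  also have "\<dots> = 1" by (simp add: cstar_cstar)
  finally show ?thesis .
qed

lemma cstar_scaleR: "cstar (scaleR r x) = scaleR r (cstar (x::'a::cstar_algebra))"
  by (simp add: scaleR_scaleC cstar_scaleC)

lemma norm_cstar_le: "norm (x::'a::cstar_algebra) \<le> norm (cstar x)"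
proof (cases "x = 0")
  case True then show ?thesis by simp
next
  case False
  have "(norm x)\<^sup>2 = norm (cstar x * x)" by (simp add: cstar_identity)
  also have "\<dots> \<le> norm (cstar x) * norm x" by (rule norm_mult_ineq)
  finally have "norm x * norm x \<le> norm (cstar x) * norm x" by (simp add: power2_eq_square)
  then show ?thesis using False by simp
qed

lemma norm_cstar [simp]: "norm (cstar x) = norm (x::'a::cstar_algebra)"
  by (metis antisym cstar_cstar norm_cstar_le)

lemma bounded_linear_cstar: "bounded_linear (cstar :: 'a::cstar_algebra \<Rightarrow> 'a)"
  by (rule bounded_linear_intro[where K=1]) (auto simp: cstar_add cstar_scaleR)

lemma cstar_power: "cstar (x ^ n) = (cstar x) ^ n" for x :: "'a::cstar_algebra"
  by (induction n) (auto simp: cstar_mult power_commutes)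

lemma cstar_scaleC_one: "cstar (scaleC c (1::'a::cstar_algebra)) = scaleC (cnj c) 1"
  by (simp add: cstar_scaleC)

lemma scaleC_as_mult: "scaleC c x = scaleC c (1::'a::cstar_algebra) * x"
  by (simp add: scaleC_mult_left)

lemma scaleC_one_commute: "x * scaleC c (1::'a::cstar_algebra) = scaleC c 1 * x"
  by (simp add: scaleC_mult_left mult_scaleC_right)

section \<open>Square roots\<close>

lemma gbinomial_half_bound: "\<bar>(1/2::real) gchoose n\<bar> \<le> 1"
proof (induction n)
  case 0 then show ?case by simp
next
  case (Suc k)
  have "(1/2::real) * ((1/2) gchoose k) = of_nat k * ((1/2) gchoose k) + of_nat (Suc k) * ((1/2) gchoose (Suc k))"
    by (rule gbinomial_mult_1)
  then have eq: "((1/2::real) gchoose (Suc k)) = (1/2 - of_nat k) / of_nat (Suc k) * ((1/2) gchoose k)"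
    by (simp add: field_simps)
  have "\<bar>(1/2 - real k) / real (Suc k)\<bar> \<le> 1" by (simp add: abs_if field_simps)
  then have "\<bar>((1/2::real) gchoose (Suc k))\<bar> \<le> 1 * 1"
    unfolding eq abs_mult using Suc.IH by (intro mult_mono) auto
  then show ?case by simp
qed

lemma one_gchoose: "((1::real) gchoose n) = (if n = 0 \<or> n = 1 then 1 else 0)"
proof -
  have "((1::real) gchoose n) = real (1 choose n)"
    by (metis binomial_gbinomial of_nat_1)
  then show ?thesis by (cases n) (auto simp: binomial_eq_0)
qed

lemma cstar_sqrt:
  fixes y :: "'a::cstar_algebra"
  assumes sa: "cstar y = y" and ny: "norm y < 1"
  shows "\<exists>s. cstar s = s \<and> s * s = 1 - y \<and> (\<forall>a. a * y = y * a \<longrightarrow> a * s = s * a)"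
proof -
  define c where "c = (\<lambda>n. (1/2::real) gchoose n)"
  define f where "f = (\<lambda>n. c n *\<^sub>R (- y) ^ n)"
  have nf: "norm (f n) \<le> norm y ^ n" for n
  proof -
    have "norm (f n) = \<bar>c n\<bar> * norm ((- y) ^ n)" by (simp add: f_def)
    also have "\<dots> \<le> 1 * norm y ^ n"
      using gbinomial_half_bound[of n] norm_power_ineq[of "- y" n]
      by (intro mult_mono) (auto simp: c_def)
    finally show ?thesis by simp
  qed
  have sn: "summable (\<lambda>n. norm (f n))"
    by (rule summable_comparison_test[OF _ summable_geometric[of "norm y"]]) (use nf ny in auto)
  then have sf: "summable f" by (rule summable_norm_cancel)
  define s where "s = suminf f"
  have "s * s = (\<Sum>k. \<Sum>i\<le>k. f i * f (k - i))"
    unfolding s_def by (rule Cauchy_product[OF sn sn])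
  also have "\<dots> = (\<Sum>k. ((1::real) gchoose k) *\<^sub>R (- y) ^ k)"
  proof (rule suminf_cong)
    fix k
    have "(\<Sum>i\<le>k. f i * f (k - i)) = (\<Sum>i\<le>k. (c i * c (k - i)) *\<^sub>R (- y) ^ k)"
    proof (rule sum.cong)
      fix i assume "i \<in> {..k}"
      then have "(- y) ^ i * (- y) ^ (k - i) = (- y) ^ k" by (simp add: power_add[symmetric])
      then show "f i * f (k - i) = (c i * c (k - i)) *\<^sub>R (- y) ^ k"
        by (simp add: f_def)
    qed simp
    also have "\<dots> = (\<Sum>i\<le>k. c i * c (k - i)) *\<^sub>R (- y) ^ k"
      by (simp add: scaleR_sum_left)
    also have "(\<Sum>i\<le>k. c i * c (k - i)) = ((1::real) gchoose k)"
      using gbinomial_Vandermonde[of "1/2::real" "1/2" k] by (simp add: c_def atMost_atLeast0)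
    finally show "(\<Sum>i\<le>k. f i * f (k - i)) = ((1::real) gchoose k) *\<^sub>R (- y) ^ k" .
  qed
  also have "\<dots> = 1 - y"
  proof -
    have "(\<lambda>k. ((1::real) gchoose k) *\<^sub>R (- y) ^ k) sums (\<Sum>k\<in>{0,1}. ((1::real) gchoose k) *\<^sub>R (- y) ^ k)"
      by (rule sums_finite) (auto simp: one_gchoose)
    then show ?thesis by (simp add: sums_iff)
  qed
  finally have ss: "s * s = 1 - y" .
  have sa': "cstar s = s"
  proof -
    have "cstar s = (\<Sum>n. cstar (f n))"
      unfolding s_def by (rule bounded_linear.suminf[OF bounded_linear_cstar sf])
    also have "\<dots> = s" unfolding s_def
      by (rule suminf_cong) (simp add: f_def cstar_scaleR cstar_power cstar_minus sa)
    finally show ?thesis .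
  qed
  have comm: "a * s = s * a" if ay: "a * y = y * a" for a
  proof -
    have pw: "a * (- y) ^ n = (- y) ^ n * a" for n
    proof (induction n)
      case 0 then show ?case by simp
    next
      case (Suc n)
      have "a * (- y) ^ Suc n = (a * (- y)) * (- y) ^ n" by (simp add: mult.assoc)
      also have "\<dots> = (- y) * (a * (- y) ^ n)" using ay by (simp add: mult.assoc)
      also have "\<dots> = (- y) ^ Suc n * a" using Suc.IH by (simp add: mult.assoc)
      finally show ?case .
    qed
    have "a * s = (\<Sum>n. a * f n)"
      unfolding s_def by (rule bounded_linear.suminf[OF bounded_linear_mult_right sf])
    also have "\<dots> = (\<Sum>n. f n * a)"
      by (rule suminf_cong) (simp add: f_def pw)
    also have "\<dots> = s * a"
      unfolding s_def by (rule bounded_linear.suminf[OF bounded_linear_mult_left sf, symmetric])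
    finally show ?thesis .
  qed
  show ?thesis using sa' ss comm by blast
qed




lemma unit_prod1:
  fixes a s :: "'a::cstar_algebra"
  assumes as: "a * s = s * a"
  shows "(a + scaleC \<i> s) * (a - scaleC \<i> s) = a * a + s * s"
proof -
  have e1: "scaleC \<i> s * a = scaleC \<i> (a * s)" by (simp add: scaleC_mult_left as)
  have e2: "a * scaleC \<i> s = scaleC \<i> (a * s)" by (simp add: mult_scaleC_right)
  have e3: "scaleC \<i> s * scaleC \<i> s = - (s * s)"
    by (simp add: scaleC_mult_left mult_scaleC_right scaleC_scaleC scaleC_minus_left scaleC_one)
  have "(a + scaleC \<i> s) * (a - scaleC \<i> s) = a * a - a * scaleC \<i> s + (scaleC \<i> s * a - scaleC \<i> s * scaleC \<i> s)"
    by (simp add: distrib_right right_diff_distrib)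
  also have "\<dots> = a * a + s * s" by (simp add: e1 e2 e3)
  finally show ?thesis .
qed
lemma unit_prod2:
  fixes a s :: "'a::cstar_algebra"
  assumes as: "a * s = s * a"
  shows "(a - scaleC \<i> s) * (a + scaleC \<i> s) = a * a + s * s"
proof -
  have e1: "scaleC \<i> s * a = scaleC \<i> (a * s)" by (simp add: scaleC_mult_left as)
  have e2: "a * scaleC \<i> s = scaleC \<i> (a * s)" by (simp add: mult_scaleC_right)
  have e3: "scaleC \<i> s * scaleC \<i> s = - (s * s)"
    by (simp add: scaleC_mult_left mult_scaleC_right scaleC_scaleC scaleC_minus_left scaleC_one)
  have "(a - scaleC \<i> s) * (a + scaleC \<i> s) = a * a + a * scaleC \<i> s - (scaleC \<i> s * a + scaleC \<i> s * scaleC \<i> s)"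
    by (simp add: left_diff_distrib distrib_left)
  also have "\<dots> = a * a + s * s" by (simp add: e1 e2 e3)
  finally show ?thesis .
qed
lemma cstar_unit_comb:
  fixes a s :: "'a::cstar_algebra"
  assumes "cstar a = a" "cstar s = s"
  shows "cstar (a + scaleC \<i> s) = a - scaleC \<i> s"
proof -
  have "cstar (a + scaleC \<i> s) = a + scaleC (- \<i>) s" by (simp add: cstar_add cstar_scaleC assms)
  also have "\<dots> = a - scaleC \<i> s" by (simp only: scaleC_minus_left diff_conv_add_uminus)
  finally show ?thesis .
qed
locale gns =
  fixes B :: "'a::cstar_algebra set"
    and \<phi> :: "'a \<Rightarrow> complex"
    and \<Lambda> :: "'a \<Rightarrow> 'h::complex_hilbert"
    and \<rho> :: "'a \<Rightarrow> 'h \<Rightarrow> 'h"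
  assumes B: "unital_sub_cstar B"
    and state: "is_state \<phi>"
    and GNS: "is_GNS \<phi> \<Lambda> \<rho>"
begin

lemma \<Lambda>_add: "\<Lambda> (a + b) = \<Lambda> a + \<Lambda> b"
  using GNS by (simp add: is_GNS_def clinear_def)

lemma \<Lambda>_scaleC: "\<Lambda> (scaleC c a) = scaleC c (\<Lambda> a)"
  using GNS by (simp add: is_GNS_def clinear_def)

lemma \<Lambda>_zero [simp]: "\<Lambda> 0 = 0"
  by (metis \<Lambda>_add add_0 add_cancel_right_right)

lemma \<Lambda>_minus: "\<Lambda> (- a) = - \<Lambda> a"
  by (metis \<Lambda>_add \<Lambda>_zero add.inverse_unique add.right_inverse)

lemma \<Lambda>_diff: "\<Lambda> (a - b) = \<Lambda> a - \<Lambda> b"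
  by (metis \<Lambda>_add \<Lambda>_minus diff_conv_add_uminus)

lemma cinner_\<Lambda>: "cinner (\<Lambda> a1) (\<Lambda> a2) = \<phi> (cstar a2 * a1)"
  using GNS by (simp add: is_GNS_def)

lemma dense: "closure (range \<Lambda>) = UNIV"
  using GNS by (simp add: is_GNS_def)

lemma \<rho>_\<Lambda>: "\<rho> a (\<Lambda> b) = \<Lambda> (a * b)"
  using GNS by (simp add: is_GNS_def)

lemma \<rho>_bl: "bounded_linear (\<rho> a)"
  using GNS by (simp add: is_GNS_def)

lemma \<rho>_cl: "clinear (\<rho> a)"
  using GNS by (simp add: is_GNS_def)

lemma \<rho>_add: "\<rho> a (x + y) = \<rho> a x + \<rho> a y"
  using \<rho>_cl by (simp add: clinear_def)

lemma \<rho>_scaleC: "\<rho> a (scaleC c x) = scaleC c (\<rho> a x)"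
  using \<rho>_cl by (simp add: clinear_def)

lemma \<rho>_diff: "\<rho> a (x - y) = \<rho> a x - \<rho> a y"
  using \<rho>_bl[of a] by (simp add: linear_simps)

lemma \<rho>_zero [simp]: "\<rho> a 0 = 0"
  using \<rho>_bl[of a] by (simp add: linear_simps)

lemma \<rho>_cont: "continuous_on S (\<rho> a)"
  by (rule linear_continuous_on[OF \<rho>_bl])

lemma \<rho>_cont2: "continuous_on UNIV f \<Longrightarrow> continuous_on UNIV (\<lambda>x. \<rho> a (f x))"
  by (rule continuous_on_compose2[OF \<rho>_cont]) auto

lemma dense_eq:
  fixes f g :: "'h \<Rightarrow> 'z::t2_space"
  assumes "continuous_on UNIV f" "continuous_on UNIV g" "\<And>b. f (\<Lambda> b) = g (\<Lambda> b)"
  shows "f x = g x"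
proof -
  have "closed {x. f x = g x}" by (rule closed_Collect_eq[OF assms(1,2)])
  moreover have "range \<Lambda> \<subseteq> {x. f x = g x}" using assms(3) by auto
  ultimately have "closure (range \<Lambda>) \<subseteq> {x. f x = g x}" by (rule closure_minimal[rotated])
  then show ?thesis using dense by auto
qed

lemma dense_le:
  fixes f g :: "'h \<Rightarrow> real"
  assumes "continuous_on UNIV f" "continuous_on UNIV g" "\<And>b. f (\<Lambda> b) \<le> g (\<Lambda> b)"
  shows "f x \<le> g x"
proof -
  have "closed {x. f x \<le> g x}" by (rule closed_Collect_le[OF assms(1,2)])
  moreover have "range \<Lambda> \<subseteq> {x. f x \<le> g x}" using assms(3) by auto
  ultimately have "closure (range \<Lambda>) \<subseteq> {x. f x \<le> g x}" by (rule closure_minimal[rotated])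
  then show ?thesis using dense by auto
qed

lemma \<rho>_one: "\<rho> 1 x = x"
  by (rule dense_eq[where f="\<rho> 1" and g="\<lambda>x. x"]) (auto simp: \<rho>_cont \<rho>_\<Lambda>)

lemma \<rho>_mult: "\<rho> (a * b) x = \<rho> a (\<rho> b x)"
  by (rule dense_eq[where f="\<rho> (a * b)" and g="\<lambda>x. \<rho> a (\<rho> b x)"])
     (auto simp: \<rho>_cont \<rho>_cont2 \<rho>_\<Lambda> mult.assoc continuous_on_id)

lemma \<rho>_alg_diff: "\<rho> (a - b) x = \<rho> a x - \<rho> b x"
  by (rule dense_eq[where f="\<rho> (a - b)" and g="\<lambda>x. \<rho> a x - \<rho> b x"])
     (auto simp: \<rho>_cont \<rho>_\<Lambda> left_diff_distrib \<Lambda>_diff intro!: continuous_on_diff)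

lemma \<phi>_add: "\<phi> (x + y) = \<phi> x + \<phi> y"
  using state by (simp add: is_state_def clinear_def)

lemma \<phi>_scaleC: "\<phi> (scaleC c x) = c * \<phi> x"
  using state by (simp add: is_state_def clinear_def scaleC_complex_def)

lemma \<phi>_diff: "\<phi> (x - y) = \<phi> x - \<phi> y"
  by (metis \<phi>_add add_diff_cancel_right' diff_add_cancel)

lemma \<phi>_scaleR: "\<phi> (scaleR r x) = complex_of_real r * \<phi> x"
  by (simp add: scaleR_scaleC \<phi>_scaleC)

lemma \<phi>_pos: "0 \<le> Re (\<phi> (cstar a * a))"
  using state by (simp add: is_state_def)

lemma \<phi>_one: "\<phi> 1 = 1"
  using state by (simp add: is_state_def)

lemma pos_sa:
  assumes sa: "cstar y = y" and ny: "norm y < 1"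
  shows "Re (\<phi> (cstar c * y * c)) \<le> Re (\<phi> (cstar c * c))"
proof -
  obtain s where ss: "cstar s = s" "s * s = 1 - y" using cstar_sqrt[OF sa ny] by blast
  have "cstar (s * c) * (s * c) = cstar c * (s * s) * c"
    by (simp add: cstar_mult ss(1) mult.assoc)
  also have "\<dots> = cstar c * c - cstar c * y * c"
    by (simp add: ss algebra_simps)
  finally have "0 \<le> Re (\<phi> (cstar c * c - cstar c * y * c))" using \<phi>_pos[of "s * c"] by simp
  then show ?thesis by (simp add: \<phi>_diff)
qed

lemma pos_bound: "Re (\<phi> (cstar c * (cstar z * z) * c)) \<le> (norm z)\<^sup>2 * Re (\<phi> (cstar c * c))"
proof -
  define P where "P = Re (\<phi> (cstar c * c))"
  define N where "N = (norm z)\<^sup>2"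
  define X where "X = Re (\<phi> (cstar c * (cstar z * z) * c))"
  have P0: "P \<ge> 0" by (simp add: P_def \<phi>_pos)
  have N0: "N \<ge> 0" by (simp add: N_def)
  have key: "X \<le> (N + \<epsilon>) * P" if e: "\<epsilon> > 0" for \<epsilon>
  proof -
    define y where "y = (1 / (N + \<epsilon>)) *\<^sub>R (cstar z * z)"
    have Ne: "N + \<epsilon> > 0" using N0 e by simp
    have sa: "cstar y = y" by (simp add: y_def cstar_scaleR cstar_mult cstar_cstar)
    have "norm y = N / (N + \<epsilon>)"
      using Ne by (simp add: y_def cstar_identity N_def)
    also have "\<dots> < 1" using Ne e by simp
    finally have ny: "norm y < 1" .
    have "cstar c * y * c = (1 / (N + \<epsilon>)) *\<^sub>R (cstar c * (cstar z * z) * c)"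
      by (simp add: y_def)
    then have "Re (\<phi> (cstar c * y * c)) = X / (N + \<epsilon>)"
      by (simp add: \<phi>_scaleR X_def)
    then have "X / (N + \<epsilon>) \<le> P" using pos_sa[OF sa ny, of c] by (simp add: P_def)
    then show ?thesis using Ne by (simp add: field_simps)
  qed
  have "X \<le> N * P"
  proof (rule field_le_epsilon)
    fix e :: real assume e: "e > 0"
    define \<epsilon> where "\<epsilon> = e / (P + 1)"
    have "\<epsilon> > 0" using e P0 by (simp add: \<epsilon>_def)
    then have "X \<le> N * P + \<epsilon> * P" using key[of \<epsilon>] by (simp add: algebra_simps)
    moreover have "\<epsilon> * P \<le> e" using e P0 by (simp add: \<epsilon>_def field_simps)
    ultimately show "X \<le> N * P + e" by simp
  qed
  then show ?thesis by (simp add: X_def N_def P_def)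
qed

lemma norm_\<Lambda>_sq: "(norm (\<Lambda> a))\<^sup>2 = Re (\<phi> (cstar a * a))"
  by (simp add: norm_sq_cinner cinner_\<Lambda>)

lemma \<rho>_norm: "norm (\<rho> z x) \<le> norm z * norm x"
proof (rule dense_le[where f="\<lambda>x. norm (\<rho> z x)" and g="\<lambda>x. norm z * norm x"])
  show "continuous_on UNIV (\<lambda>x. norm (\<rho> z x))" by (intro continuous_intros \<rho>_cont2 continuous_on_id)
  show "continuous_on UNIV (\<lambda>x. norm z * norm x)" by (intro continuous_intros)
  fix b
  have "(norm (\<rho> z (\<Lambda> b)))\<^sup>2 = Re (\<phi> (cstar b * (cstar z * z) * b))"
    by (simp add: \<rho>_\<Lambda> norm_\<Lambda>_sq cstar_mult mult.assoc)
  also have "\<dots> \<le> (norm z)\<^sup>2 * (norm (\<Lambda> b))\<^sup>2"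
    using pos_bound[of b z] by (simp add: norm_\<Lambda>_sq)
  also have "\<dots> = (norm z * norm (\<Lambda> b))\<^sup>2" by (simp add: power_mult_distrib)
  finally show "norm (\<rho> z (\<Lambda> b)) \<le> norm z * norm (\<Lambda> b)"
    by (rule power2_le_imp_le) simp
qed

lemma unitary_iff: "u \<in> unitary_group \<longleftrightarrow> u * cstar u = 1 \<and> cstar u * u = 1"
  by (simp add: unitary_group_def)

lemma \<rho>_inv1: "u \<in> unitary_group \<Longrightarrow> \<rho> (cstar u) (\<rho> u x) = x"
  by (metis \<rho>_mult \<rho>_one unitary_iff)

lemma \<rho>_inv2: "u \<in> unitary_group \<Longrightarrow> \<rho> u (\<rho> (cstar u) x) = x"
  by (metis \<rho>_mult \<rho>_one unitary_iff)

lemma \<rho>_unitary_cinner: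
  assumes u: "u \<in> unitary_group"
  shows "cinner (\<rho> u x) (\<rho> u y) = cinner x y"
proof -
  have cont: "continuous_on UNIV (\<lambda>x. cinner (\<rho> u x) (\<rho> u y))" for y
    by (intro continuous_intros \<rho>_cont2 continuous_on_id continuous_on_const)
  have cont': "continuous_on UNIV (\<lambda>y. cinner (\<rho> u x) (\<rho> u y))" for x
    by (intro continuous_intros \<rho>_cont2 continuous_on_id continuous_on_const)
  have base: "cinner (\<rho> u (\<Lambda> a)) (\<rho> u (\<Lambda> b)) = cinner (\<Lambda> a) (\<Lambda> b)" for a b
  proof -
    have "cstar (u * b) * (u * a) = cstar b * (cstar u * u) * a" by (simp add: cstar_mult mult.assoc)
    then show ?thesis using u by (simp add: \<rho>_\<Lambda> cinner_\<Lambda> unitary_iff)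
  qed
  have step: "cinner (\<rho> u x) (\<rho> u (\<Lambda> b)) = cinner x (\<Lambda> b)" for x b
    by (rule dense_eq[where f="\<lambda>x. cinner (\<rho> u x) (\<rho> u (\<Lambda> b))" and g="\<lambda>x. cinner x (\<Lambda> b)"])
       (auto intro!: cont continuous_intros simp: base)
  show ?thesis
    by (rule dense_eq[where f="\<lambda>y. cinner (\<rho> u x) (\<rho> u y)" and g="\<lambda>y. cinner x y"])
       (auto intro!: cont' continuous_intros simp: step)
qed

lemma \<rho>_unitary_norm: "u \<in> unitary_group \<Longrightarrow> norm (\<rho> u x) = norm x"
  by (simp add: norm_cinner \<rho>_unitary_cinner)

lemma \<rho>_adjoint:
  assumes u: "u \<in> unitary_group"
  shows "cinner (\<rho> (cstar u) x) y = cinner x (\<rho> u y)"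
  by (metis \<rho>_inv2 \<rho>_unitary_cinner u)

section \<open>Unitaries span A\<close>

lemma unitary_span:
  assumes H: "\<And>u. u \<in> unitary_group \<Longrightarrow> cinner h (\<Lambda> u) = 0"
  shows "cinner h (\<Lambda> x) = 0"
proof -
  define Q where "Q = (\<lambda>a. cinner h (\<Lambda> a) = 0)"
  have Qadd: "Q a \<Longrightarrow> Q b \<Longrightarrow> Q (a + b)" for a b
    by (simp add: Q_def \<Lambda>_add cinner_add_right)
  have Qsc: "Q a \<Longrightarrow> Q (scaleC c a)" for a c
    by (simp add: Q_def \<Lambda>_scaleC cinner_scaleC_right)
  have Qu: "u \<in> unitary_group \<Longrightarrow> Q u" for u using H by (simp add: Q_def)
  have Q1: "Q a" if sa: "cstar a = a" and na: "norm a < 1" for a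
  proof -
    define y where "y = a * a"
    have say: "cstar y = y" by (simp add: y_def cstar_mult sa)
    have "norm y = (norm a)\<^sup>2" using cstar_identity[of a] by (simp add: y_def sa)
    also have "\<dots> < 1" using na by (simp add: power_less_one_iff abs_less_iff)
    finally have ny: "norm y < 1" .
    obtain s where ss: "cstar s = s" "s * s = 1 - y" "\<And>b. b * y = y * b \<Longrightarrow> b * s = s * b"
      using cstar_sqrt[OF say ny] by blast
    have as: "a * s = s * a" using ss(3)[of a] by (simp add: y_def mult.assoc)
    define w1 where "w1 = a + scaleC \<i> s"
    define w2 where "w2 = a - scaleC \<i> s"
    have cw1: "cstar w1 = w2"
      unfolding w1_def w2_def by (rule cstar_unit_comb[OF sa ss(1)])
    have cw2: "cstar w2 = w1"
      by (metis cstar_cstar cw1)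
    have p12: "w1 * w2 = 1"
      using unit_prod1[OF as] by (simp add: w1_def w2_def ss(2) y_def)
    have p21: "w2 * w1 = 1"
      using unit_prod2[OF as] by (simp add: w1_def w2_def ss(2) y_def)
    have u1: "w1 \<in> unitary_group" using p12 p21 cw1 by (simp add: unitary_iff)
    have u2: "w2 \<in> unitary_group" using p12 p21 cw2 by (simp add: unitary_iff)
    have "Q (scaleC (1/2) (w1 + w2))" by (intro Qsc Qadd Qu u1 u2)
    moreover have "scaleC (1/2) (w1 + w2) = a"
    proof -
      have "w1 + w2 = a + a" by (simp add: w1_def w2_def)
      then have "scaleC (1/2) (w1 + w2) = scaleC (1/2 + 1/2) a"
        by (simp only: scaleC_add_right scaleC_add_left)
      then show ?thesis by (simp add: scaleC_one)
    qed
    ultimately show ?thesis by simp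
  qed
  have Q2: "Q a" if sa: "cstar a = a" for a
  proof -
    define r where "r = norm a + 1"
    have r0: "r > 0" by (simp add: r_def add_nonneg_pos)
    define a' where "a' = scaleC (complex_of_real (1 / r)) a"
    have "cstar a' = a'" by (simp add: a'_def cstar_scaleC sa)
    moreover have "norm a' < 1"
    proof -
      have ar: "norm a < r" by (simp add: r_def)
      have "norm a' = norm a / r" using r0 by (simp add: a'_def norm_scaleC norm_divide)
      then show ?thesis using ar r0 by simp
    qed
    ultimately have "Q (scaleC (complex_of_real r) a')" by (intro Qsc Q1)
    moreover have "scaleC (complex_of_real r) a' = a"
      using r0 by (simp add: a'_def scaleC_scaleC scaleC_one)
    ultimately show ?thesis by simp
  qed
  define h1 where "h1 = scaleC (1/2) (x + cstar x)"
  define k where "k = scaleC (- \<i> / 2) (x - cstar x)"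
  have sh1: "cstar h1 = h1" by (simp add: h1_def cstar_scaleC cstar_add cstar_cstar add.commute)
  have sk: "cstar k = k"
  proof -
    have "cstar k = scaleC (\<i> / 2) (cstar x - x)" by (simp add: k_def cstar_scaleC cstar_diff cstar_cstar)
    also have "\<dots> = scaleC (- \<i> / 2) (x - cstar x)"
      by (metis minus_diff_eq scaleC_minus_left scaleC_minus_right minus_divide_left)
    finally show ?thesis by (simp add: k_def)
  qed
  have "Q (h1 + scaleC \<i> k)" using Q2[OF sh1] Q2[OF sk] by (intro Qadd Qsc)
  moreover have "h1 + scaleC \<i> k = x"
  proof -
    have ik: "scaleC \<i> k = scaleC (1/2) (x - cstar x)" by (simp add: k_def scaleC_scaleC)
    have "h1 + scaleC \<i> k = scaleC (1/2) ((x + cstar x) + (x - cstar x))"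
      by (simp only: h1_def ik scaleC_add_right[symmetric])
    also have "(x + cstar x) + (x - cstar x) = x + x" by simp
    also have "scaleC (1/2) (x + x) = scaleC (1/2 + 1/2) x"
      by (simp only: scaleC_add_right scaleC_add_left)
    finally show ?thesis by (simp add: scaleC_one)
  qed
  ultimately show ?thesis by (simp add: Q_def)
qed

end




section \<open>Quotient topology\<close>

lemma istopology_quot:
  "istopology (\<lambda>U. U \<subseteq> q ` topspace X \<and> openin X {x \<in> topspace X. q x \<in> U})"
  unfolding istopology_def
proof (rule conjI)
  show "\<forall>S T. S \<subseteq> q ` topspace X \<and> openin X {x \<in> topspace X. q x \<in> S} \<longrightarrow>
          T \<subseteq> q ` topspace X \<and> openin X {x \<in> topspace X. q x \<in> T} \<longrightarrow>
          S \<inter> T \<subseteq> q ` topspace X \<and> openin X {x \<in> topspace X. q x \<in> S \<inter> T}"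
  proof (intro allI impI)
    fix S T
    assume a1: "S \<subseteq> q ` topspace X \<and> openin X {x \<in> topspace X. q x \<in> S}"
      and a2: "T \<subseteq> q ` topspace X \<and> openin X {x \<in> topspace X. q x \<in> T}"
    then have "openin X ({x \<in> topspace X. q x \<in> S} \<inter> {x \<in> topspace X. q x \<in> T})" by auto
    moreover have "{x \<in> topspace X. q x \<in> S \<inter> T} = {x \<in> topspace X. q x \<in> S} \<inter> {x \<in> topspace X. q x \<in> T}"
      by auto
    ultimately show "S \<inter> T \<subseteq> q ` topspace X \<and> openin X {x \<in> topspace X. q x \<in> S \<inter> T}"
      using a1 by auto
  qed
  show "\<forall>K. (\<forall>k\<in>K. k \<subseteq> q ` topspace X \<and> openin X {x \<in> topspace X. q x \<in> k}) \<longrightarrow>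
          \<Union>K \<subseteq> q ` topspace X \<and> openin X {x \<in> topspace X. q x \<in> \<Union>K}"
  proof (intro allI impI)
    fix K assume K: "\<forall>k\<in>K. k \<subseteq> q ` topspace X \<and> openin X {x \<in> topspace X. q x \<in> k}"
    have "{x \<in> topspace X. q x \<in> \<Union>K} = \<Union>((\<lambda>k. {x \<in> topspace X. q x \<in> k}) ` K)" by auto
    moreover have "openin X (\<Union>((\<lambda>k. {x \<in> topspace X. q x \<in> k}) ` K))"
      using K by (intro openin_Union) auto
    ultimately show "\<Union>K \<subseteq> q ` topspace X \<and> openin X {x \<in> topspace X. q x \<in> \<Union>K}"
      using K by auto
  qed
qed

lemma openin_quot_top:
  "openin (quot_top X q) U \<longleftrightarrow> U \<subseteq> q ` topspace X \<and> openin X {x \<in> topspace X. q x \<in> U}"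
  unfolding quot_top_def by (simp add: istopology_quot)

lemma topspace_quot_top: "topspace (quot_top X q) = q ` topspace X"
proof -
  have "{x \<in> topspace X. q x \<in> q ` topspace X} = topspace X" by auto
  then have "openin (quot_top X q) (q ` topspace X)"
    by (simp add: openin_quot_top)
  then have "q ` topspace X \<subseteq> topspace (quot_top X q)" by (rule openin_subset)
  moreover have "topspace (quot_top X q) \<subseteq> q ` topspace X"
  proof
    fix y assume "y \<in> topspace (quot_top X q)"
    then obtain U where "openin (quot_top X q) U" "y \<in> U" unfolding topspace_def by blast
    then show "y \<in> q ` topspace X" by (auto simp: openin_quot_top)
  qed
  ultimately show ?thesis by blast
qed

lemma continuous_map_quot: "continuous_map X (quot_top X q) q"
  unfolding continuous_map by (auto simp: topspace_quot_top openin_quot_top)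

lemma continuous_map_from_quot:
  assumes "continuous_map X Y (g \<circ> q)"
  shows "continuous_map (quot_top X q) Y g"
  unfolding continuous_map
proof (intro conjI allI impI)
  show "g ` topspace (quot_top X q) \<subseteq> topspace Y"
    using assms by (auto simp: topspace_quot_top continuous_map)
  fix U assume U: "openin Y U"
  have "{x \<in> topspace X. q x \<in> {y \<in> topspace (quot_top X q). g y \<in> U}} = {x \<in> topspace X. (g \<circ> q) x \<in> U}"
    by (auto simp: topspace_quot_top)
  moreover have "openin X {x \<in> topspace X. (g \<circ> q) x \<in> U}"
    using assms U by (auto simp: continuous_map)
  ultimately show "openin (quot_top X q) {x \<in> topspace (quot_top X q). g x \<in> U}"
    by (auto simp: openin_quot_top topspace_quot_top)
qed


lemma unitary_mult: "u \<in> unitary_group \<Longrightarrow> v \<in> unitary_group \<Longrightarrow> u * v \<in> (unitary_group::'a::cstar_algebra set)"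
proof -
  assume u: "u \<in> unitary_group" and v: "v \<in> unitary_group"
  have "(u * v) * cstar (u * v) = u * (v * cstar v) * cstar u" by (simp add: cstar_mult mult.assoc)
  also have "\<dots> = 1" using u v by (simp add: unitary_group_def)
  finally have 1: "(u * v) * cstar (u * v) = 1" .
  have "cstar (u * v) * (u * v) = cstar v * (cstar u * u) * v" by (simp add: cstar_mult mult.assoc)
  also have "\<dots> = 1" using u v by (simp add: unitary_group_def)
  finally show ?thesis using 1 by (simp add: unitary_group_def)
qed

lemma unitary_cstar: "u \<in> unitary_group \<Longrightarrow> cstar u \<in> (unitary_group::'a::cstar_algebra set)"
  by (simp add: unitary_group_def cstar_cstar)

lemma unitary_one: "1 \<in> (unitary_group::'a::cstar_algebra set)"
  by (simp add: unitary_group_def)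

context gns
begin

lemma B1: "1 \<in> B" using B by (simp add: unital_sub_cstar_def)
lemma Bclosed: "closed B" using B by (simp add: unital_sub_cstar_def)
lemma Badd: "x \<in> B \<Longrightarrow> y \<in> B \<Longrightarrow> x + y \<in> B" using B by (simp add: unital_sub_cstar_def)
lemma Bmult: "x \<in> B \<Longrightarrow> y \<in> B \<Longrightarrow> x * y \<in> B" using B by (simp add: unital_sub_cstar_def)
lemma BscaleC: "x \<in> B \<Longrightarrow> scaleC c x \<in> B" using B by (simp add: unital_sub_cstar_def)
lemma Bcstar: "x \<in> B \<Longrightarrow> cstar x \<in> B" using B by (simp add: unital_sub_cstar_def)
lemma B0: "0 \<in> B" using BscaleC[OF B1, of 0] by simp

lemma UB_one: "1 \<in> UB B" using B1 unitary_one by simp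
lemma UB_mult: "v \<in> UB B \<Longrightarrow> w \<in> UB B \<Longrightarrow> v * w \<in> UB B"
  using unitary_mult Bmult by auto
lemma UB_cstar: "v \<in> UB B \<Longrightarrow> cstar v \<in> UB B"
  using unitary_cstar Bcstar by auto

lemma UB_left_image: "w \<in> UB B \<Longrightarrow> (\<lambda>v. w * v) ` UB B = UB B"
proof
  assume w: "w \<in> UB B"
  show "(\<lambda>v. w * v) ` UB B \<subseteq> UB B" using UB_mult w by auto
  show "UB B \<subseteq> (\<lambda>v. w * v) ` UB B"
  proof
    fix v assume v: "v \<in> UB B"
    have "v = w * (cstar w * v)" using w by (simp add: unitary_group_def mult.assoc[symmetric])
    moreover have "cstar w * v \<in> UB B" using UB_mult UB_cstar v w by blast
    ultimately show "v \<in> (\<lambda>v. w * v) ` UB B" by blast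
  qed
qed

section \<open>The subspace H_phi and the projection\<close>

abbreviation "HS \<equiv> Hphi \<Lambda> B"
abbreviation "PP \<equiv> cproj (Hphi \<Lambda> B)"

lemma HS_closed: "closed HS" by (simp add: Hphi_def)

lemma \<Lambda>B_in: "b \<in> B \<Longrightarrow> \<Lambda> b \<in> HS"
  unfolding Hphi_def by (rule closure_subset[THEN subsetD]) (rule imageI)

lemma HS_zero: "0 \<in> HS" using \<Lambda>B_in[OF B0] by simp

lemma HS_add: assumes "x \<in> HS" "y \<in> HS" shows "x + y \<in> HS"
proof -
  obtain f where f: "\<And>n. f n \<in> \<Lambda> ` B" "f \<longlonglongrightarrow> x"
    using assms(1) unfolding Hphi_def closure_sequential by blast
  obtain g where g: "\<And>n. g n \<in> \<Lambda> ` B" "g \<longlonglongrightarrow> y"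
    using assms(2) unfolding Hphi_def closure_sequential by blast
  have "\<And>n. f n + g n \<in> \<Lambda> ` B"
  proof -
    fix n
    obtain a b where "a \<in> B" "b \<in> B" "f n = \<Lambda> a" "g n = \<Lambda> b" using f(1)[of n] g(1)[of n] by blast
    then have "f n + g n = \<Lambda> (a + b)" "a + b \<in> B" by (simp_all add: \<Lambda>_add Badd)
    then show "f n + g n \<in> \<Lambda> ` B" by blast
  qed
  moreover have "(\<lambda>n. f n + g n) \<longlonglongrightarrow> x + y" by (intro tendsto_intros f g)
  ultimately show ?thesis unfolding Hphi_def closure_sequential
    by (intro exI[where x="\<lambda>n. f n + g n"]) auto
qed

lemma HS_scaleC: assumes "x \<in> HS" shows "scaleC c x \<in> HS"
proof -
  obtain f where f: "\<And>n. f n \<in> \<Lambda> ` B" "f \<longlonglongrightarrow> x"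
    using assms(1) unfolding Hphi_def closure_sequential by blast
  have "\<And>n. scaleC c (f n) \<in> \<Lambda> ` B"
  proof -
    fix n
    obtain a where "a \<in> B" "f n = \<Lambda> a" using f(1)[of n] by blast
    then have "scaleC c (f n) = \<Lambda> (scaleC c a)" "scaleC c a \<in> B" by (simp_all add: \<Lambda>_scaleC BscaleC)
    then show "scaleC c (f n) \<in> \<Lambda> ` B" by blast
  qed
  moreover have "(\<lambda>n. scaleC c (f n)) \<longlonglongrightarrow> scaleC c x"
    by (rule bounded_linear.tendsto[OF bounded_linear_scaleC f(2)])
  ultimately show ?thesis unfolding Hphi_def closure_sequential
    by (intro exI[where x="\<lambda>n. scaleC c (f n)"]) auto
qed

lemma HS_diff: "x \<in> HS \<Longrightarrow> y \<in> HS \<Longrightarrow> x - y \<in> HS"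
  using HS_add[of x "scaleC (-1) y"] HS_scaleC[of y "-1"]
  by (simp add: scaleC_minus_left scaleC_one)

lemma \<rho>_HS: assumes b: "b \<in> B" and x: "x \<in> HS" shows "\<rho> b x \<in> HS"
proof -
  have "\<rho> b ` closure (\<Lambda> ` B) \<subseteq> HS"
  proof (rule image_closure_subset)
    show "continuous_on (closure (\<Lambda> ` B)) (\<rho> b)" by (rule \<rho>_cont)
    show "closed HS" by (rule HS_closed)
    show "\<rho> b ` \<Lambda> ` B \<subseteq> HS"
    proof
      fix y assume "y \<in> \<rho> b ` \<Lambda> ` B"
      then obtain a where a: "a \<in> B" "y = \<rho> b (\<Lambda> a)" by blast
      then have "y = \<Lambda> (b * a)" by (simp add: \<rho>_\<Lambda>)
      then show "y \<in> HS" using \<Lambda>B_in Bmult[OF b a(1)] by simp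
    qed
  qed
  then show ?thesis using x by (auto simp: Hphi_def)
qed

lemma PP_spec: "PP x \<in> HS \<and> (\<forall>q\<in>HS. cinner (x - PP x) q = 0)"
proof -
  have ex: "\<exists>p. p \<in> HS \<and> (\<forall>q\<in>HS. cinner (x - p) q = 0)"
    by (rule proj_exists[OF HS_closed HS_zero HS_add HS_scaleC])
  then obtain p where p: "p \<in> HS \<and> (\<forall>q\<in>HS. cinner (x - p) q = 0)" by (elim exE)
  have uniq: "p' = p" if pp: "p' \<in> HS \<and> (\<forall>q\<in>HS. cinner (x - p') q = 0)" for p'
  proof -
    have d: "p' - p \<in> HS" using pp p by (intro HS_diff) simp_all
    have e1: "cinner (x - p) (p' - p) = 0" using p d by simp
    have e2: "cinner (x - p') (p' - p) = 0" using pp d by simp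
    have "cinner ((x - p) - (x - p')) (p' - p) = 0" unfolding cinner_diff_left[of "x - p" "x - p'" "p' - p"] e1 e2 by simp
    then have "cinner (p' - p) (p' - p) = 0" by simp
    then have "norm (p' - p) = 0" by (simp add: norm_cinner)
    then show ?thesis by simp
  qed
  have "PP x = p" unfolding cproj_def
    by (rule the_equality[where P="\<lambda>p. p \<in> HS \<and> (\<forall>q\<in>HS. cinner (x - p) q = 0)", OF p uniq])
  then show ?thesis using p by simp
qed

lemma PP_in: "PP x \<in> HS" using PP_spec by blast
lemma PP_orth: "q \<in> HS \<Longrightarrow> cinner (x - PP x) q = 0" using PP_spec by blast

lemma PP_unique: assumes "p \<in> HS" "\<And>q. q \<in> HS \<Longrightarrow> cinner (x - p) q = 0" shows "PP x = p"
proof -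
  have d: "PP x - p \<in> HS" using assms PP_in HS_diff by blast
  have "cinner (x - p) (PP x - p) = 0" "cinner (x - PP x) (PP x - p) = 0" using assms d PP_orth by auto
  then have "cinner ((x - p) - (x - PP x)) (PP x - p) = 0" by (simp add: cinner_diff_left)
  then have "cinner (PP x - p) (PP x - p) = 0" by simp
  then have "norm (PP x - p) = 0" by (simp add: norm_cinner)
  then show ?thesis by simp
qed

lemma PP_add: "PP (x + y) = PP x + PP y"
proof (rule PP_unique)
  show "PP x + PP y \<in> HS" by (intro HS_add PP_in)
  fix q assume q: "q \<in> HS"
  have "x + y - (PP x + PP y) = (x - PP x) + (y - PP y)" by simp
  then have "cinner (x + y - (PP x + PP y)) q = cinner (x - PP x) q + cinner (y - PP y) q"
    by (simp only: cinner_add_left)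
  also have "\<dots> = 0" using q by (simp add: PP_orth)
  finally show "cinner (x + y - (PP x + PP y)) q = 0" .
qed

lemma PP_scaleC: "PP (scaleC c x) = scaleC c (PP x)"
proof (rule PP_unique)
  show "scaleC c (PP x) \<in> HS" by (intro HS_scaleC PP_in)
  fix q assume q: "q \<in> HS"
  have "scaleC c x - scaleC c (PP x) = scaleC c (x - PP x)" by (simp only: scaleC_diff_right)
  then have "cinner (scaleC c x - scaleC c (PP x)) q = c * cinner (x - PP x) q"
    by (simp only: cinner_scaleC_left)
  also have "\<dots> = 0" using q by (simp add: PP_orth)
  finally show "cinner (scaleC c x - scaleC c (PP x)) q = 0" .
qed

lemma PP_diff: "PP (x - y) = PP x - PP y"
proof (rule PP_unique)
  show "PP x - PP y \<in> HS" by (intro HS_diff PP_in)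
  fix q assume q: "q \<in> HS"
  have "x - y - (PP x - PP y) = (x - PP x) - (y - PP y)" by simp
  then have "cinner (x - y - (PP x - PP y)) q = cinner (x - PP x) q - cinner (y - PP y) q"
    by (simp only: cinner_diff_left)
  also have "\<dots> = 0" using q by (simp add: PP_orth)
  finally show "cinner (x - y - (PP x - PP y)) q = 0" .
qed

lemma PP_fix: "x \<in> HS \<Longrightarrow> PP x = x"
  by (rule PP_unique) auto

lemma PP_inner: "f \<in> HS \<Longrightarrow> cinner (PP x) f = cinner x f"
  using PP_orth[of f x] by (simp add: cinner_diff_left)

lemma PP_norm: "norm (PP x) \<le> norm x"
proof -
  have o: "cinner (PP x) (x - PP x) = 0"
    using PP_orth[OF PP_in, of x] by (metis cinner_commute complex_cnj_zero)
  have "(norm x)\<^sup>2 = (norm (PP x + (x - PP x)))\<^sup>2" by simp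
  also have "\<dots> = (norm (PP x))\<^sup>2 + (norm (x - PP x))\<^sup>2" by (simp only: norm_add_sq o) simp
  finally have "(norm (PP x))\<^sup>2 \<le> (norm x)\<^sup>2" by simp
  then show ?thesis by (rule power2_le_imp_le) simp
qed

lemma PP_cont: "continuous_on X PP"
proof (rule lipschitz_on_continuous_on)
  show "1-lipschitz_on X PP"
  proof (rule lipschitz_onI)
    fix x y show "dist (PP x) (PP y) \<le> 1 * dist x y"
      using PP_norm[of "x - y"] by (simp add: dist_norm PP_diff)
  qed simp
qed

lemma PP_commute:
  assumes w: "w \<in> UB B"
  shows "PP (\<rho> w x) = \<rho> w (PP x)"
proof (rule PP_unique)
  have wB: "w \<in> B" "cstar w \<in> B" using w Bcstar by auto
  have wu: "w \<in> unitary_group" using w by auto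
  show "\<rho> w (PP x) \<in> HS" by (rule \<rho>_HS[OF wB(1) PP_in])
  fix q assume q: "q \<in> HS"
  have "cinner (\<rho> w x - \<rho> w (PP x)) q = cinner (\<rho> w (x - PP x)) q" by (simp add: \<rho>_diff)
  also have "\<dots> = cinner (x - PP x) (\<rho> (cstar w) q)"
    using \<rho>_adjoint[OF unitary_cstar[OF wu]] by (simp add: cstar_cstar)
  also have "\<dots> = 0" by (rule PP_orth[OF \<rho>_HS[OF wB(2) q]])
  finally show "cinner (\<rho> w x - \<rho> w (PP x)) q = 0" .
qed

end




context gns
begin

section \<open>The homogeneous bundle\<close>

lemma lcoset_mult: "w \<in> UB B \<Longrightarrow> lcoset B (u * w) = lcoset B u"
proof -
  assume w: "w \<in> UB B"
  have "lcoset B (u * w) = (\<lambda>v. u * v) ` ((\<lambda>v. w * v) ` UB B)"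
    by (simp add: lcoset_def image_image mult.assoc)
  then show ?thesis using UB_left_image[OF w] by (simp add: lcoset_def)
qed

lemma lcoset_eqD: "lcoset B u = lcoset B u' \<Longrightarrow> \<exists>w\<in>UB B. u' = u * w"
proof -
  assume e: "lcoset B u = lcoset B u'"
  have "u' \<in> lcoset B u'" unfolding lcoset_def using UB_one by (metis image_eqI mult_1_right)
  then have "u' \<in> lcoset B u" using e by simp
  then show ?thesis unfolding lcoset_def by blast
qed

lemma bcls_mem: "(u, f) \<in> bcls \<rho> B u f"
  unfolding bcls_def using UB_one by (intro image_eqI[where x=1]) (simp_all add: \<rho>_one)

lemma bcls_mult: assumes w: "w \<in> UB B" shows "bcls \<rho> B (u * w) (\<rho> (cstar w) f) = bcls \<rho> B u f"
proof -
  have "bcls \<rho> B (u * w) (\<rho> (cstar w) f) = (\<lambda>v. (u * v, \<rho> (cstar v) f)) ` ((\<lambda>v. w * v) ` UB B)"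
    unfolding bcls_def image_image by (rule image_cong) (simp_all add: mult.assoc cstar_mult \<rho>_mult)
  then show ?thesis using UB_left_image[OF w] by (simp add: bcls_def)
qed

lemma bcls_eqD: "bcls \<rho> B u f = bcls \<rho> B u' f' \<Longrightarrow> \<exists>v\<in>UB B. u' = u * v \<and> f' = \<rho> (cstar v) f"
proof -
  assume e: "bcls \<rho> B u f = bcls \<rho> B u' f'"
  have "(u', f') \<in> bcls \<rho> B u f" using bcls_mem[of u' f'] e by simp
  then show ?thesis unfolding bcls_def by auto
qed

lemma unitary_left_cancel: "u \<in> unitary_group \<Longrightarrow> u * v = u * v' \<Longrightarrow> v = v'"
  by (metis mult.assoc mult_1_left unitary_iff)

lemma bcls_inj: assumes u: "u \<in> unitary_group" and e: "bcls \<rho> B u f = bcls \<rho> B u g" shows "f = g"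
proof -
  obtain v where v: "v \<in> UB B" "u = u * v" "g = \<rho> (cstar v) f" using bcls_eqD[OF e] by blast
  have "u * 1 = u * v" using v(2) by simp
  then have "v = 1" using unitary_left_cancel[OF u] by metis
  then show ?thesis using v(3) by (simp add: \<rho>_one)
qed

lemma bproj_bcls: "bproj B (bcls \<rho> B u f) = lcoset B u"
  unfolding bproj_def
proof (rule the_equality)
  show "\<forall>p\<in>bcls \<rho> B u f. lcoset B u = lcoset B (fst p)"
    unfolding bcls_def by (auto simp: lcoset_mult)
  fix s assume "\<forall>p\<in>bcls \<rho> B u f. s = lcoset B (fst p)"
  then show "s = lcoset B u" using bcls_mem[of u f] by fastforce
qed

lemma realiz_eq:
  assumes u: "u \<in> unitary_group"
  shows "realiz \<Lambda> \<rho> B h (lcoset B u) = bcls \<rho> B u (PP (\<rho> (cstar u) h))"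
  unfolding realiz_def
proof (rule the_equality)
  show "\<exists>u'\<in>unitary_group. lcoset B u = lcoset B u' \<and>
          bcls \<rho> B u (PP (\<rho> (cstar u) h)) = bcls \<rho> B u' (PP (\<rho> (cstar u') h))"
    using u by blast
  fix \<xi> assume "\<exists>u'\<in>unitary_group. lcoset B u = lcoset B u' \<and> \<xi> = bcls \<rho> B u' (PP (\<rho> (cstar u') h))"
  then obtain u' where u': "lcoset B u = lcoset B u'" "\<xi> = bcls \<rho> B u' (PP (\<rho> (cstar u') h))" by blast
  obtain w where w: "w \<in> UB B" "u' = u * w" using lcoset_eqD[OF u'(1)] by blast
  have cw: "cstar w \<in> UB B" using UB_cstar[OF w(1)] .
  have "PP (\<rho> (cstar u') h) = \<rho> (cstar w) (PP (\<rho> (cstar u) h))"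
    using w(2) by (simp add: cstar_mult \<rho>_mult PP_commute[OF cw])
  then show "\<xi> = bcls \<rho> B u (PP (\<rho> (cstar u) h))"
    using u'(2) w(2) bcls_mult[OF w(1)] by simp
qed

lemma same_v:
  assumes u: "u \<in> unitary_group" and "u' = u * v1" "u' = u * v2"
  shows "v1 = v2"
  using assms unitary_left_cancel by metis

lemma finner_eq:
  assumes u: "u \<in> unitary_group" and f: "f \<in> HS" and g: "g \<in> HS"
  shows "finner \<Lambda> \<rho> B (bcls \<rho> B u f) (bcls \<rho> B u g) = cinner f g"
  unfolding finner_def
proof (rule the_equality)
  show "\<exists>u' f' g'. u' \<in> unitary_group \<and> f' \<in> HS \<and> g' \<in> HS \<and>
      bcls \<rho> B u f = bcls \<rho> B u' f' \<and> bcls \<rho> B u g = bcls \<rho> B u' g' \<and> cinner f g = cinner f' g'"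
    using u f g by blast
  fix c assume "\<exists>u' f' g'. u' \<in> unitary_group \<and> f' \<in> HS \<and> g' \<in> HS \<and>
      bcls \<rho> B u f = bcls \<rho> B u' f' \<and> bcls \<rho> B u g = bcls \<rho> B u' g' \<and> c = cinner f' g'"
  then obtain u' f' g' where h: "bcls \<rho> B u f = bcls \<rho> B u' f'" "bcls \<rho> B u g = bcls \<rho> B u' g'"
      "c = cinner f' g'" by blast
  obtain v1 where v1: "v1 \<in> UB B" "u' = u * v1" "f' = \<rho> (cstar v1) f" using bcls_eqD[OF h(1)] by blast
  obtain v2 where v2: "v2 \<in> UB B" "u' = u * v2" "g' = \<rho> (cstar v2) g" using bcls_eqD[OF h(2)] by blast
  have "v1 = v2" using same_v[OF u v1(2) v2(2)] .
  moreover have "cstar v1 \<in> unitary_group" using v1(1) unitary_cstar by auto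
  ultimately show "c = cinner f g" using h(3) v1(3) v2(3) by (simp add: \<rho>_unitary_cinner)
qed

lemma fadd_eq:
  assumes u: "u \<in> unitary_group" and f: "f \<in> HS" and g: "g \<in> HS"
  shows "fadd \<Lambda> \<rho> B (bcls \<rho> B u f) (bcls \<rho> B u g) = bcls \<rho> B u (f + g)"
  unfolding fadd_def
proof (rule the_equality)
  show "\<exists>u' f' g'. u' \<in> unitary_group \<and> f' \<in> HS \<and> g' \<in> HS \<and>
      bcls \<rho> B u f = bcls \<rho> B u' f' \<and> bcls \<rho> B u g = bcls \<rho> B u' g' \<and> bcls \<rho> B u (f + g) = bcls \<rho> B u' (f' + g')"
    using u f g by blast
  fix \<zeta> assume "\<exists>u' f' g'. u' \<in> unitary_group \<and> f' \<in> HS \<and> g' \<in> HS \<and>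
      bcls \<rho> B u f = bcls \<rho> B u' f' \<and> bcls \<rho> B u g = bcls \<rho> B u' g' \<and> \<zeta> = bcls \<rho> B u' (f' + g')"
  then obtain u' f' g' where h: "bcls \<rho> B u f = bcls \<rho> B u' f'" "bcls \<rho> B u g = bcls \<rho> B u' g'"
      "\<zeta> = bcls \<rho> B u' (f' + g')" by blast
  obtain v1 where v1: "v1 \<in> UB B" "u' = u * v1" "f' = \<rho> (cstar v1) f" using bcls_eqD[OF h(1)] by blast
  obtain v2 where v2: "v2 \<in> UB B" "u' = u * v2" "g' = \<rho> (cstar v2) g" using bcls_eqD[OF h(2)] by blast
  have "v1 = v2" using same_v[OF u v1(2) v2(2)] .
  then have "f' + g' = \<rho> (cstar v1) (f + g)" using v1(3) v2(3) by (simp add: \<rho>_add)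
  then show "\<zeta> = bcls \<rho> B u (f + g)" using h(3) v1(2) bcls_mult[OF v1(1)] by simp
qed

lemma fscale_eq:
  assumes u: "u \<in> unitary_group" and f: "f \<in> HS"
  shows "fscale \<Lambda> \<rho> B c (bcls \<rho> B u f) = bcls \<rho> B u (scaleC c f)"
  unfolding fscale_def
proof (rule the_equality)
  show "\<exists>u' f'. u' \<in> unitary_group \<and> f' \<in> HS \<and>
      bcls \<rho> B u f = bcls \<rho> B u' f' \<and> bcls \<rho> B u (scaleC c f) = bcls \<rho> B u' (scaleC c f')"
    using u f by blast
  fix \<zeta> assume "\<exists>u' f'. u' \<in> unitary_group \<and> f' \<in> HS \<and>
      bcls \<rho> B u f = bcls \<rho> B u' f' \<and> \<zeta> = bcls \<rho> B u' (scaleC c f')"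
  then obtain u' f' where h: "bcls \<rho> B u f = bcls \<rho> B u' f'" "\<zeta> = bcls \<rho> B u' (scaleC c f')" by blast
  obtain v1 where v1: "v1 \<in> UB B" "u' = u * v1" "f' = \<rho> (cstar v1) f" using bcls_eqD[OF h(1)] by blast
  have "scaleC c f' = \<rho> (cstar v1) (scaleC c f)" using v1(3) by (simp add: \<rho>_scaleC)
  then show "\<zeta> = bcls \<rho> B u (scaleC c f)" using h(2) v1(2) bcls_mult[OF v1(1)] by simp
qed

lemma kern_eq:
  assumes u1: "u1 \<in> unitary_group" and u2: "u2 \<in> unitary_group" and f: "f \<in> HS"
  shows "kern \<Lambda> \<rho> B (lcoset B u1) (lcoset B u2) (bcls \<rho> B u2 f) = bcls \<rho> B u1 (PP (\<rho> (cstar u1 * u2) f))"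
  unfolding kern_def
proof (rule the_equality)
  show "\<exists>u1' u2' f'. u1' \<in> unitary_group \<and> u2' \<in> unitary_group \<and> f' \<in> HS \<and>
      lcoset B u1 = lcoset B u1' \<and> lcoset B u2 = lcoset B u2' \<and> bcls \<rho> B u2 f = bcls \<rho> B u2' f' \<and>
      bcls \<rho> B u1 (PP (\<rho> (cstar u1 * u2) f)) = bcls \<rho> B u1' (PP (\<rho> (cstar u1' * u2') f'))"
    using u1 u2 f by blast
  fix \<zeta> assume "\<exists>u1' u2' f'. u1' \<in> unitary_group \<and> u2' \<in> unitary_group \<and> f' \<in> HS \<and>
      lcoset B u1 = lcoset B u1' \<and> lcoset B u2 = lcoset B u2' \<and> bcls \<rho> B u2 f = bcls \<rho> B u2' f' \<and>
      \<zeta> = bcls \<rho> B u1' (PP (\<rho> (cstar u1' * u2') f'))"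
  then obtain u1' u2' f' where h: "lcoset B u1 = lcoset B u1'" "bcls \<rho> B u2 f = bcls \<rho> B u2' f'"
      "\<zeta> = bcls \<rho> B u1' (PP (\<rho> (cstar u1' * u2') f'))" by blast
  obtain w where w: "w \<in> UB B" "u1' = u1 * w" using lcoset_eqD[OF h(1)] by blast
  obtain v where v: "v \<in> UB B" "u2' = u2 * v" "f' = \<rho> (cstar v) f" using bcls_eqD[OF h(2)] by blast
  have vu: "v \<in> unitary_group" using v(1) by simp
  have cw: "cstar w \<in> UB B" using UB_cstar[OF w(1)] .
  have "\<rho> (cstar u1' * u2') f' = \<rho> (cstar w) (\<rho> (cstar u1 * u2) (\<rho> v (\<rho> (cstar v) f)))"
    using w(2) v(2,3) by (simp add: cstar_mult \<rho>_mult mult.assoc)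
  also have "\<dots> = \<rho> (cstar w) (\<rho> (cstar u1 * u2) f)" by (simp add: \<rho>_inv2[OF vu])
  finally have "PP (\<rho> (cstar u1' * u2') f') = \<rho> (cstar w) (PP (\<rho> (cstar u1 * u2) f))"
    by (simp add: PP_commute[OF cw])
  then show "\<zeta> = bcls \<rho> B u1 (PP (\<rho> (cstar u1 * u2) f))"
    using h(3) w(2) bcls_mult[OF w(1)] by simp
qed

definition Tm :: "('a \<times> 'h) set \<Rightarrow> 'h" where
  "Tm \<xi> = (THE x. \<exists>u f. u \<in> unitary_group \<and> f \<in> HS \<and> \<xi> = bcls \<rho> B u f \<and> x = \<rho> u f)"

lemma Tm_eq:
  assumes u: "u \<in> unitary_group" and f: "f \<in> HS"
  shows "Tm (bcls \<rho> B u f) = \<rho> u f"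
  unfolding Tm_def
proof (rule the_equality)
  show "\<exists>u' f'. u' \<in> unitary_group \<and> f' \<in> HS \<and> bcls \<rho> B u f = bcls \<rho> B u' f' \<and> \<rho> u f = \<rho> u' f'"
    using u f by blast
  fix x assume "\<exists>u' f'. u' \<in> unitary_group \<and> f' \<in> HS \<and> bcls \<rho> B u f = bcls \<rho> B u' f' \<and> x = \<rho> u' f'"
  then obtain u' f' where h: "bcls \<rho> B u f = bcls \<rho> B u' f'" "x = \<rho> u' f'" by blast
  obtain v where v: "v \<in> UB B" "u' = u * v" "f' = \<rho> (cstar v) f" using bcls_eqD[OF h(1)] by blast
  have vu: "v \<in> unitary_group" using v(1) by simp
  show "x = \<rho> u f" using h(2) v(2,3) by (simp add: \<rho>_mult \<rho>_inv2[OF vu])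
qed

lemma fiber_elim:
  assumes "\<xi> \<in> fiber \<Lambda> \<rho> B t"
  obtains u f where "u \<in> unitary_group" "f \<in> HS" "\<xi> = bcls \<rho> B u f" "t = lcoset B u"
  using assms unfolding fiber_def hbundle_def by (auto simp: bproj_bcls)

lemma realiz_fiber:
  assumes u: "u \<in> unitary_group"
  shows "realiz \<Lambda> \<rho> B h (lcoset B u) \<in> fiber \<Lambda> \<rho> B (lcoset B u)"
  unfolding fiber_def hbundle_def using u PP_in by (auto simp: realiz_eq bproj_bcls)

lemma hom_act_lcoset: "hom_act v (lcoset B u) = lcoset B (v * u)"
  by (simp add: hom_act_def lcoset_def image_image mult.assoc)

lemma bact_bcls: "bact v (bcls \<rho> B u g) = bcls \<rho> B (v * u) g"
  by (simp add: bact_def bcls_def image_image mult.assoc)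

lemma rho_cstar_cont: "continuous_on X (\<lambda>u. \<rho> (cstar u) h)"
proof (rule lipschitz_on_continuous_on)
  show "(norm h)-lipschitz_on X (\<lambda>u. \<rho> (cstar u) h)"
  proof (rule lipschitz_onI)
    fix x y :: 'a
    have "dist (\<rho> (cstar x) h) (\<rho> (cstar y) h) = norm (\<rho> (cstar (x - y)) h)"
      by (simp add: dist_norm cstar_diff \<rho>_alg_diff)
    also have "\<dots> \<le> norm (cstar (x - y)) * norm h" by (rule \<rho>_norm)
    also have "\<dots> = norm h * dist x y" by (simp add: dist_norm)
    finally show "dist (\<rho> (cstar x) h) (\<rho> (cstar y) h) \<le> norm h * dist x y" .
  qed simp
qed

lemma realiz_cont: "continuous_map (hom_top B) (bundle_top \<Lambda> \<rho> B) (realiz \<Lambda> \<rho> B h)"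
  unfolding hom_top_def
proof (rule continuous_map_from_quot)
  have k: "continuous_map (top_of_set unitary_group) (prod_topology (top_of_set unitary_group) (top_of_set HS))
      (\<lambda>u. (u, PP (\<rho> (cstar u) h)))"
    unfolding continuous_map_pairwise o_def fst_conv snd_conv
  proof (intro conjI)
    show "continuous_map (top_of_set unitary_group) (top_of_set unitary_group) (\<lambda>x. x)"
      using continuous_map_id by (simp add: id_def)
    show "continuous_map (top_of_set unitary_group) (top_of_set HS) (\<lambda>x. PP (\<rho> (cstar x) h))"
      unfolding continuous_map_subtopology_eu
      using continuous_on_compose2[OF PP_cont rho_cstar_cont] PP_in by auto
  qed
  have q: "continuous_map (prod_topology (top_of_set unitary_group) (top_of_set HS)) (bundle_top \<Lambda> \<rho> B)
      (\<lambda>(u, f). bcls \<rho> B u f)"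
    unfolding bundle_top_def by (rule continuous_map_quot)
  have "continuous_map (top_of_set unitary_group) (bundle_top \<Lambda> \<rho> B)
      ((\<lambda>(u, f). bcls \<rho> B u f) \<circ> (\<lambda>u. (u, PP (\<rho> (cstar u) h))))"
    by (rule continuous_map_compose[OF k q])
  then show "continuous_map (top_of_set unitary_group) (bundle_top \<Lambda> \<rho> B) (realiz \<Lambda> \<rho> B h \<circ> lcoset B)"
    by (rule continuous_map_eq) (simp add: realiz_eq)
qed

lemma inj_realiz:
  assumes e: "\<forall>s\<in>homspace B. realiz \<Lambda> \<rho> B h1 s = realiz \<Lambda> \<rho> B h2 s"
  shows "h1 = h2"
proof -
  define d where "d = h1 - h2"
  have 0: "cinner d (\<Lambda> u) = 0" if u: "u \<in> unitary_group" for u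
  proof -
    have "lcoset B u \<in> homspace B" using u by (simp add: homspace_def)
    then have "realiz \<Lambda> \<rho> B h1 (lcoset B u) = realiz \<Lambda> \<rho> B h2 (lcoset B u)"
      using e by blast
    then have "bcls \<rho> B u (PP (\<rho> (cstar u) h1)) = bcls \<rho> B u (PP (\<rho> (cstar u) h2))"
      by (simp only: realiz_eq[OF u])
    then have "PP (\<rho> (cstar u) h1) = PP (\<rho> (cstar u) h2)" by (rule bcls_inj[OF u])
    then have pd: "PP (\<rho> (cstar u) d) = 0" by (simp add: d_def \<rho>_diff PP_diff)
    have "cinner d (\<Lambda> u) = cinner d (\<rho> u (\<Lambda> 1))" by (simp add: \<rho>_\<Lambda>)
    also have "\<dots> = cinner (\<rho> (cstar u) d) (\<Lambda> 1)" by (rule \<rho>_adjoint[OF u, symmetric])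
    also have "\<dots> = cinner (PP (\<rho> (cstar u) d)) (\<Lambda> 1)" by (rule PP_inner[OF \<Lambda>B_in[OF B1], symmetric])
    also have "\<dots> = 0" by (simp add: pd)
    finally show ?thesis .
  qed
  have all: "cinner d (\<Lambda> a) = 0" for a by (rule unitary_span[OF 0])
  have "cinner d y = 0" for y
    by (rule dense_eq[where f="\<lambda>y. cinner d y" and g="\<lambda>y. 0"])
       (auto intro!: continuous_intros simp: all)
  then have "cinner d d = 0" .
  then have "norm d = 0" by (simp add: norm_cinner)
  then show ?thesis by (simp add: d_def)
qed

end




theorem theorem5p4:
  fixes B :: "'a::cstar_algebra set"
    and \<phi> :: "'a \<Rightarrow> complex"
    and \<Lambda> :: "'a \<Rightarrow> 'h::complex_hilbert"
    and \<rho> :: "'a \<Rightarrow> 'h \<Rightarrow> 'h"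
  assumes B: "unital_sub_cstar B"
    and state: "is_state \<phi>"
    and E: "\<exists>E. cond_exp E B \<and> (\<forall>a. \<phi> (E a) = \<phi> a)"
    and GNS: "is_GNS \<phi> \<Lambda> \<rho>"
  shows
    \<comment> \<open>(1) \<iota> maps H into continuous sections of D and is injective\<close>
    "(\<forall>h. continuous_map (hom_top B) (bundle_top \<Lambda> \<rho> B) (realiz \<Lambda> \<rho> B h) \<and>
          (\<forall>s\<in>homspace B. realiz \<Lambda> \<rho> B h s \<in> fiber \<Lambda> \<rho> B s)) \<and>
     (\<forall>h1 h2. (\<forall>s\<in>homspace B. realiz \<Lambda> \<rho> B h1 s = realiz \<Lambda> \<rho> B h2 s) \<longrightarrow> h1 = h2) \<and>
    \<comment> \<open>(2) each evaluation map ev_s is bounded linear H \<rightarrow> D_s\<close>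
     (\<forall>s\<in>homspace B.
        (\<forall>h1 h2. realiz \<Lambda> \<rho> B (h1 + h2) s = fadd \<Lambda> \<rho> B (realiz \<Lambda> \<rho> B h1 s) (realiz \<Lambda> \<rho> B h2 s)) \<and>
        (\<forall>c h. realiz \<Lambda> \<rho> B (scaleC c h) s = fscale \<Lambda> \<rho> B c (realiz \<Lambda> \<rho> B h s)) \<and>
        (\<exists>C. \<forall>h. sqrt (Re (finner \<Lambda> \<rho> B (realiz \<Lambda> \<rho> B h s) (realiz \<Lambda> \<rho> B h s))) \<le> C * norm h)) \<and>
    \<comment> \<open>(3) K(s,t) = ev_s (ev_t)^*\<close>
     (\<forall>s\<in>homspace B. \<forall>t\<in>homspace B. \<exists>T.
        (\<forall>h. \<forall>\<xi>\<in>fiber \<Lambda> \<rho> B t. finner \<Lambda> \<rho> B (realiz \<Lambda> \<rho> B h t) \<xi> = cinner h (T \<xi>)) \<and>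
        (\<forall>\<xi>\<in>fiber \<Lambda> \<rho> B t. kern \<Lambda> \<rho> B s t \<xi> = realiz \<Lambda> \<rho> B (T \<xi>) s)) \<and>
    \<comment> \<open>(4) intertwining property\<close>
     (\<forall>v\<in>unitary_group. \<forall>h. \<forall>s\<in>homspace B.
        realiz \<Lambda> \<rho> B (\<rho> v h) s = bact v (realiz \<Lambda> \<rho> B h (hom_act (cstar v) s)))"
proof -
  interpret gns B \<phi> \<Lambda> \<rho> by (rule gns.intro) (fact B state GNS)+
  have hs: "\<exists>u\<in>unitary_group. s = lcoset B u" if "s \<in> homspace B" for s
    using that by (auto simp: homspace_def)
  have P1: "\<forall>h. continuous_map (hom_top B) (bundle_top \<Lambda> \<rho> B) (realiz \<Lambda> \<rho> B h) \<and>
          (\<forall>s\<in>homspace B. realiz \<Lambda> \<rho> B h s \<in> fiber \<Lambda> \<rho> B s)"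
  proof (intro allI conjI ballI)
    fix h show "continuous_map (hom_top B) (bundle_top \<Lambda> \<rho> B) (realiz \<Lambda> \<rho> B h)" by (rule realiz_cont)
    fix s assume "s \<in> homspace B"
    then obtain u where u: "u \<in> unitary_group" "s = lcoset B u" using hs by blast
    then show "realiz \<Lambda> \<rho> B h s \<in> fiber \<Lambda> \<rho> B s" using realiz_fiber by simp
  qed
  have P2: "\<forall>h1 h2. (\<forall>s\<in>homspace B. realiz \<Lambda> \<rho> B h1 s = realiz \<Lambda> \<rho> B h2 s) \<longrightarrow> h1 = h2"
    using inj_realiz by blast
  have P3: "\<forall>s\<in>homspace B.
        (\<forall>h1 h2. realiz \<Lambda> \<rho> B (h1 + h2) s = fadd \<Lambda> \<rho> B (realiz \<Lambda> \<rho> B h1 s) (realiz \<Lambda> \<rho> B h2 s)) \<and>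
        (\<forall>c h. realiz \<Lambda> \<rho> B (scaleC c h) s = fscale \<Lambda> \<rho> B c (realiz \<Lambda> \<rho> B h s)) \<and>
        (\<exists>C. \<forall>h. sqrt (Re (finner \<Lambda> \<rho> B (realiz \<Lambda> \<rho> B h s) (realiz \<Lambda> \<rho> B h s))) \<le> C * norm h)"
  proof
    fix s assume "s \<in> homspace B"
    then obtain u where u: "u \<in> unitary_group" and s: "s = lcoset B u" using hs by blast
    have a: "realiz \<Lambda> \<rho> B (h1 + h2) s = fadd \<Lambda> \<rho> B (realiz \<Lambda> \<rho> B h1 s) (realiz \<Lambda> \<rho> B h2 s)" for h1 h2
      unfolding s realiz_eq[OF u] fadd_eq[OF u PP_in PP_in] by (simp add: \<rho>_add PP_add)
    have b: "realiz \<Lambda> \<rho> B (scaleC c h) s = fscale \<Lambda> \<rho> B c (realiz \<Lambda> \<rho> B h s)" for c h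
      unfolding s realiz_eq[OF u] fscale_eq[OF u PP_in] by (simp add: \<rho>_scaleC PP_scaleC)
    have c: "sqrt (Re (finner \<Lambda> \<rho> B (realiz \<Lambda> \<rho> B h s) (realiz \<Lambda> \<rho> B h s))) \<le> 1 * norm h" for h
    proof -
      have "sqrt (Re (finner \<Lambda> \<rho> B (realiz \<Lambda> \<rho> B h s) (realiz \<Lambda> \<rho> B h s))) = norm (PP (\<rho> (cstar u) h))"
        unfolding s realiz_eq[OF u] finner_eq[OF u PP_in PP_in] by (simp add: norm_cinner)
      also have "\<dots> \<le> norm (\<rho> (cstar u) h)" by (rule PP_norm)
      also have "\<dots> = norm h" by (rule \<rho>_unitary_norm[OF unitary_cstar[OF u]])
      finally show ?thesis by simp
    qed
    show "(\<forall>h1 h2. realiz \<Lambda> \<rho> B (h1 + h2) s = fadd \<Lambda> \<rho> B (realiz \<Lambda> \<rho> B h1 s) (realiz \<Lambda> \<rho> B h2 s)) \<and>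
        (\<forall>c h. realiz \<Lambda> \<rho> B (scaleC c h) s = fscale \<Lambda> \<rho> B c (realiz \<Lambda> \<rho> B h s)) \<and>
        (\<exists>C. \<forall>h. sqrt (Re (finner \<Lambda> \<rho> B (realiz \<Lambda> \<rho> B h s) (realiz \<Lambda> \<rho> B h s))) \<le> C * norm h)"
      using a b c by blast
  qed
  have P4: "\<forall>s\<in>homspace B. \<forall>t\<in>homspace B. \<exists>T.
        (\<forall>h. \<forall>\<xi>\<in>fiber \<Lambda> \<rho> B t. finner \<Lambda> \<rho> B (realiz \<Lambda> \<rho> B h t) \<xi> = cinner h (T \<xi>)) \<and>
        (\<forall>\<xi>\<in>fiber \<Lambda> \<rho> B t. kern \<Lambda> \<rho> B s t \<xi> = realiz \<Lambda> \<rho> B (T \<xi>) s)"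
  proof (intro ballI exI[where x=Tm] conjI allI)
    fix s t h \<xi> assume "s \<in> homspace B" "t \<in> homspace B" and xi: "\<xi> \<in> fiber \<Lambda> \<rho> B t"
    obtain u f where uf: "u \<in> unitary_group" "f \<in> HS" "\<xi> = bcls \<rho> B u f" "t = lcoset B u"
      using fiber_elim[OF xi] by blast
    have "finner \<Lambda> \<rho> B (realiz \<Lambda> \<rho> B h t) \<xi> = cinner (PP (\<rho> (cstar u) h)) f"
      unfolding uf(3,4) realiz_eq[OF uf(1)] finner_eq[OF uf(1) PP_in uf(2)] ..
    also have "\<dots> = cinner (\<rho> (cstar u) h) f" by (rule PP_inner[OF uf(2)])
    also have "\<dots> = cinner h (\<rho> u f)" by (rule \<rho>_adjoint[OF uf(1)])
    also have "\<dots> = cinner h (Tm \<xi>)" by (simp add: uf(3) Tm_eq[OF uf(1,2)])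
    finally show "finner \<Lambda> \<rho> B (realiz \<Lambda> \<rho> B h t) \<xi> = cinner h (Tm \<xi>)" .
  next
    fix s t \<xi> assume s: "s \<in> homspace B" and "t \<in> homspace B" and xi: "\<xi> \<in> fiber \<Lambda> \<rho> B t"
    obtain u f where uf: "u \<in> unitary_group" "f \<in> HS" "\<xi> = bcls \<rho> B u f" "t = lcoset B u"
      using fiber_elim[OF xi] by blast
    obtain u1 where u1: "u1 \<in> unitary_group" "s = lcoset B u1" using hs[OF s] by blast
    show "kern \<Lambda> \<rho> B s t \<xi> = realiz \<Lambda> \<rho> B (Tm \<xi>) s"
      unfolding uf(3,4) u1(2) kern_eq[OF u1(1) uf(1,2)] Tm_eq[OF uf(1,2)] realiz_eq[OF u1(1)]
      by (simp add: \<rho>_mult)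
  qed
  have P5: "\<forall>v\<in>unitary_group. \<forall>h. \<forall>s\<in>homspace B.
        realiz \<Lambda> \<rho> B (\<rho> v h) s = bact v (realiz \<Lambda> \<rho> B h (hom_act (cstar v) s))"
  proof (intro ballI allI)
    fix v :: 'a and h s assume v: "v \<in> unitary_group" and s: "s \<in> homspace B"
    obtain u where u: "u \<in> unitary_group" "s = lcoset B u" using hs[OF s] by blast
    have vu: "cstar v * u \<in> unitary_group" using unitary_mult[OF unitary_cstar[OF v] u(1)] .
    have vv: "v * (cstar v * u) = u" using v by (simp add: unitary_iff mult.assoc[symmetric])
    show "realiz \<Lambda> \<rho> B (\<rho> v h) s = bact v (realiz \<Lambda> \<rho> B h (hom_act (cstar v) s))"
      unfolding u(2) hom_act_lcoset realiz_eq[OF vu] realiz_eq[OF u(1)] bact_bcls vv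
      by (simp add: cstar_mult cstar_cstar \<rho>_mult)
  qed
  show ?thesis using P1 P2 P3 P4 P5 by blast
qed


end
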